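(* Let $\mathcal{A}$ be an associative algebra with unit $I$, and let $w_n,\tilde w_n$ ($n\ge1$) be $\mathcal{A}$-valued differentiable functions of $\mathbf{t}_o=(t_1,t_3,t_5,\ldots)$. Put $w(\mathbf{t}_o,z)=I+\sum_{n\ge1}w_nz^{-n}$, $\tilde w(\mathbf{t}_o,z)=I+\sum_{n\ge1}\tilde w_nz^{-n}$, $\tilde\xi(\mathbf{t}_o,z)=\sum_{n\ge1}t_{2n-1}z^{2n-1}$, $\psi=we^{\tilde\xi}$, $\tilde\psi=\tilde we^{-\tilde\xi}$, and suppose $\mathrm{res}_z[\psi(\mathbf{s}_o,z)\tilde\psi(\mathbf{t}_o,z)]=0$ for all $\mathbf{s}_o,\mathbf{t}_o$. Define $\phi:=-w_1$, $\tilde\theta$ by $w_2=-\tilde\theta+\frac12(\phi'+\phi^2)$, $\check\theta:=\tilde\theta+\frac12\phi'$, $F(\lambda):=I-\frac\lambda2(\phi_{2[\lambda]}-\phi)$, and $F(\lambda,\mu):=I-\frac12\frac{\lambda\mu}{\lambda+\mu}(\phi_{2[\lambda]+2[\mu]}-\phi)=\frac1{\lambda+\mu}\big(\mu F_{2[\mu]}(\lambda)+\lambda F(\mu)\big)$. Then, writing $w(z)=w(\mathbf{t}_o,z)$, $\tilde w(z)=\tilde w(\mathbf{t}_o,z)$: (i) $\tilde w_2=\tilde\theta+\frac12(\phi'+\phi^2)$; (ii) $w_{2[\lambda]}(\lambda^{-1})\,\tilde w(\lambda^{-1})=F(\lambda)$; (iii) $\big(w'(\lambda^{-1})+\lambda^{-1}w(\lambda^{-1})\big)_{2[\lambda]}\tilde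 w(\lambda^{-1})=\lambda^{-1}F(\lambda)^2-\frac\lambda2(\check\theta_{2[\lambda]}-\check\theta)+\frac\lambda4[\phi,\phi_{2[\lambda]}]$; (iv) $\mu^{-1}w_{2[\lambda]+2[\mu]}(\mu^{-1})\tilde w(\mu^{-1})-\lambda^{-1}w_{2[\lambda]+2[\mu]}(\lambda^{-1})\tilde w(\lambda^{-1})=(\mu^{-1}-\lambda^{-1})F(\lambda,\mu)$; (v) $\mu^{-1}\big(w'(\mu^{-1})+\mu^{-1}w(\mu^{-1})\big)_{2[\lambda]+2[\mu]}\tilde w(\mu^{-1})-\lambda^{-1}\big(w'(\lambda^{-1})+\lambda^{-1}w(\lambda^{-1})\big)_{2[\lambda]+2[\mu]}\tilde w(\lambda^{-1})=(\mu^{-2}-\lambda^{-2})F(\lambda,\mu)^2-\frac12\frac{\lambda-\mu}{\lambda+\mu}(\check\theta_{2[\lambda]+2[\mu]}-\check\theta)+\frac14\frac{\lambda-\mu}{\lambda+\mu}[\phi,\phi_{2[\lambda]+2[\mu]}]$.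
   Context: $\mathrm{res}_z$ of a formal series $\sum_nf_nz^{-n}$ is $f_1$. A prime denotes the partial derivative with respect to $t_1$. Miwa shifts: $f_{2[\lambda]}(\mathbf{t}_o)=f(\mathbf{t}_o+2[\lambda])$, $f_{2[\lambda]+2[\mu]}(\mathbf{t}_o)=f(\mathbf{t}_o+2[\lambda]+2[\mu])$ with $[\lambda]=(\lambda,\lambda^3/3,\lambda^5/5,\ldots)$; e.g. $w_{2[\lambda]}(\lambda^{-1})$ means $w(\mathbf{t}_o+2[\lambda],\lambda^{-1})$. Identities in $\lambda,\mu$ are understood as formal series identities. $[\cdot,\cdot]$ is the commutator. *)

theory Defs
  imports Complex_Main "HOL-Computational_Algebra.Formal_Laurent_Series"
begin

text \<open>
The A-valued differentiable functions of t_o = (t_1,t_3,t_5,...) are modelled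
by a unital associative real algebra 'r (the algebra of such functions, unit I = 1) together with
commuting derivations D k = partial derivative with respect to t_(2k+1) (so the prime is D 0).
Formal series in the spectral parameter lambda are elements of 'r fls (variable fls_X);
formal series in lambda, mu are elements of ('r fls) fls, lambda being the inner variable
and mu the outer one.
\<close>

definition Dpow :: "(nat \<Rightarrow> 'r \<Rightarrow> 'r) \<Rightarrow> nat \<Rightarrow> (nat \<Rightarrow> nat) \<Rightarrow> 'r \<Rightarrow> 'r" where
  "Dpow D N \<alpha> f = foldr (\<lambda>k g. (D k ^^ \<alpha> k) g) [0..<N] f"

definition oddwt :: "nat \<Rightarrow> (nat \<Rightarrow> nat) \<Rightarrow> nat" where
  "oddwt N \<alpha> = (\<Sum>k<N. (2 * k + 1) * \<alpha> k)"

definition mfact :: "nat \<Rightarrow> (nat \<Rightarrow> nat) \<Rightarrow> real" where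
  "mfact N \<alpha> = (\<Prod>k<N. fact (\<alpha> k))"

text \<open>Bilinear identity  res_z [psi(s_o,z) psi~(t_o,z)] = 0  for all s_o, t_o, in formal form:
 writing s_o = t_o + y, the coefficient of every monomial y^alpha of
 res_z [ w(t_o+y,z) e^(xi~(y,z)) w~(t_o,z) ] vanishes.  Here w n, wt n are the coefficients of
 z^(-n) of w and w~ (with w 0 = wt 0 = 1).\<close>
definition bilinear_identity ::
  "(nat \<Rightarrow> 'r::real_algebra_1 \<Rightarrow> 'r) \<Rightarrow> (nat \<Rightarrow> 'r) \<Rightarrow> (nat \<Rightarrow> 'r) \<Rightarrow> bool" where
  "bilinear_identity D w wt \<longleftrightarrow>
     (\<forall>N \<alpha>. (\<forall>k\<ge>N. \<alpha> k = 0) \<longrightarrow>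
        (\<Sum>\<beta>\<in>{\<beta>. \<forall>k. \<beta> k \<le> \<alpha> k}.
           inverse (mfact N \<beta> * mfact N (\<lambda>k. \<alpha> k - \<beta> k)) *\<^sub>R
           (\<Sum>n\<le>oddwt N (\<lambda>k. \<alpha> k - \<beta> k) + 1.
               Dpow D N \<beta> (w n) * wt (oddwt N (\<lambda>k. \<alpha> k - \<beta> k) + 1 - n))) = 0)"

text \<open>coefficient of lambda^m in the Miwa shift f(t_o + 2[lambda]) =
 exp(sum_k 2 lambda^(2k+1)/(2k+1) D_k) f\<close>
definition miwa_coeff :: "(nat \<Rightarrow> 'r::real_algebra_1 \<Rightarrow> 'r) \<Rightarrow> nat \<Rightarrow> 'r \<Rightarrow> 'r" where
  "miwa_coeff D m f =
     (\<Sum>\<alpha>\<in>{\<alpha>. (\<forall>k\<ge>m. \<alpha> k = 0) \<and> oddwt m \<alpha> = m}.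
        (\<Prod>k<m. (2 / real (2 * k + 1)) ^ \<alpha> k / fact (\<alpha> k)) *\<^sub>R Dpow D m \<alpha> f)"

text \<open>f(t_o + 2[lambda]) as a series in lambda\<close>
definition miwa1 :: "(nat \<Rightarrow> 'r::real_algebra_1 \<Rightarrow> 'r) \<Rightarrow> 'r \<Rightarrow> 'r fls" where
  "miwa1 D f = fps_to_fls (Abs_fps (\<lambda>m. miwa_coeff D m f))"

text \<open>c(lambda^-1) = sum_n c_n lambda^n for a sequence c of coefficients of z^(-n)\<close>
definition ser1 :: "(nat \<Rightarrow> 'r::zero) \<Rightarrow> 'r fls" where
  "ser1 c = fps_to_fls (Abs_fps c)"

text \<open>c_{2[lambda]}(lambda^-1) = sum_n lambda^n c_n(t_o + 2[lambda])\<close>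
definition shser1 :: "(nat \<Rightarrow> 'r::real_algebra_1 \<Rightarrow> 'r) \<Rightarrow> (nat \<Rightarrow> 'r) \<Rightarrow> 'r fls" where
  "shser1 D c = fps_to_fls (Abs_fps (\<lambda>N. \<Sum>n\<le>N. miwa_coeff D (N - n) (c n)))"

definition Lam :: "'r::{zero,one} fls fls" where "Lam = fls_const fls_X"
definition Mu :: "'r::{zero,one} fls fls" where "Mu = fls_X"
definition Lam_inv :: "'r::{zero,one} fls fls" where "Lam_inv = fls_const fls_X_inv"
definition Mu_inv :: "'r::{zero,one} fls fls" where "Mu_inv = fls_X_inv"
definition C2 :: "'r::zero \<Rightarrow> 'r fls fls" where "C2 x = fls_const (fls_const x)"

definition bivar :: "(nat \<Rightarrow> nat \<Rightarrow> 'r::zero) \<Rightarrow> 'r fls fls" where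
  "bivar c = fps_to_fls (Abs_fps (\<lambda>b. fps_to_fls (Abs_fps (\<lambda>a. c a b))))"

text \<open>f(t_o + 2[lambda] + 2[mu])\<close>
definition miwa2 :: "(nat \<Rightarrow> 'r::real_algebra_1 \<Rightarrow> 'r) \<Rightarrow> 'r \<Rightarrow> 'r fls fls" where
  "miwa2 D f = bivar (\<lambda>a b. miwa_coeff D a (miwa_coeff D b f))"

text \<open>f(t_o + 2[mu]) as a series in mu\<close>
definition miwa_mu :: "(nat \<Rightarrow> 'r::real_algebra_1 \<Rightarrow> 'r) \<Rightarrow> 'r \<Rightarrow> 'r fls fls" where
  "miwa_mu D f = bivar (\<lambda>a b. if a = 0 then miwa_coeff D b f else 0)"

text \<open>c(lambda^-1) and c(mu^-1)\<close>
definition ser_lam :: "(nat \<Rightarrow> 'r::zero) \<Rightarrow> 'r fls fls" where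
  "ser_lam c = bivar (\<lambda>a b. if b = 0 then c a else 0)"
definition ser_mu :: "(nat \<Rightarrow> 'r::zero) \<Rightarrow> 'r fls fls" where
  "ser_mu c = bivar (\<lambda>a b. if a = 0 then c b else 0)"

text \<open>c_{2[lambda]+2[mu]}(lambda^-1) and c_{2[lambda]+2[mu]}(mu^-1)\<close>
definition shser_lam :: "(nat \<Rightarrow> 'r::real_algebra_1 \<Rightarrow> 'r) \<Rightarrow> (nat \<Rightarrow> 'r) \<Rightarrow> 'r fls fls" where
  "shser_lam D c = bivar (\<lambda>a b. \<Sum>n\<le>a. miwa_coeff D (a - n) (miwa_coeff D b (c n)))"
definition shser_mu :: "(nat \<Rightarrow> 'r::real_algebra_1 \<Rightarrow> 'r) \<Rightarrow> (nat \<Rightarrow> 'r) \<Rightarrow> 'r fls fls" where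
  "shser_mu D c = bivar (\<lambda>a b. \<Sum>n\<le>b. miwa_coeff D a (miwa_coeff D (b - n) (c n)))"

text \<open>two-sided inverse of a unit (used for 1/(lambda+mu), a unit of ('r fls) fls)\<close>
definition uinv :: "'a::ring_1 \<Rightarrow> 'a" where
  "uinv x = (THE y. x * y = 1 \<and> y * x = 1)"

definition commut :: "'a::ring \<Rightarrow> 'a \<Rightarrow> 'a" where
  "commut x y = x * y - y * x"

end

theory Submission
  imports Defs
begin

locale dsetup =
  fixes D :: "nat \<Rightarrow> 'r::real_algebra_1 \<Rightarrow> 'r"
  assumes D_add: "\<And>k a b. D k (a + b) = D k a + D k b"
    and D_scale: "\<And>k c a. D k (c *\<^sub>R a) = c *\<^sub>R D k a"
    and D_mult: "\<And>k a b. D k (a * b) = D k a * b + a * D k b"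
    and D_comm: "\<And>j k a. D j (D k a) = D k (D j a)"
begin

lemma D_zero[simp]: "D k 0 = 0"
  using D_scale[of k 0 0] by simp

lemma D_one[simp]: "D k 1 = 0"
  using D_mult[of k 1 1] by simp

lemma D_minus: "D k (a - b) = D k a - D k b"
  using D_add[of k "a - b" b] by (simp add: algebra_simps)

lemma D_uminus: "D k (- a) = - D k a"
  using D_minus[of k 0 a] by simp

lemma D_sum: "D k (sum f A) = (\<Sum>x\<in>A. D k (f x))"
  by (induction A rule: infinite_finite_induct) (auto simp: D_add)

lemma Dn_add: "(D k ^^ n) (a + b) = (D k ^^ n) a + (D k ^^ n) b"
  by (induction n) (auto simp: D_add)
lemma Dn_scale: "(D k ^^ n) (c *\<^sub>R a) = c *\<^sub>R (D k ^^ n) a"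
  by (induction n) (auto simp: D_scale)
lemma Dn_comm: "D j ((D k ^^ n) a) = (D k ^^ n) (D j a)"
  by (induction n) (simp_all, metis D_comm)

lemma Dpow_Suc: "Dpow D (Suc N) \<alpha> f = Dpow D N \<alpha> ((D N ^^ \<alpha> N) f)"
  by (simp add: Dpow_def)

lemma Dpow_0N[simp]: "Dpow D 0 \<alpha> f = f"
  by (simp add: Dpow_def)

lemma Dpow_add: "Dpow D N \<alpha> (a + b) = Dpow D N \<alpha> a + Dpow D N \<alpha> b"
  by (induction N arbitrary: a b) (auto simp: Dpow_Suc Dn_add)
lemma Dpow_scale: "Dpow D N \<alpha> (c *\<^sub>R a) = c *\<^sub>R Dpow D N \<alpha> a"
  by (induction N arbitrary: a) (auto simp: Dpow_Suc Dn_scale)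
lemma Dpow_comm: "D j (Dpow D N \<alpha> a) = Dpow D N \<alpha> (D j a)"
  by (induction N arbitrary: a) (auto simp: Dpow_Suc Dn_comm)
lemma Dpow_zero_idx[simp]: "Dpow D N (\<lambda>_. 0) a = a"
  by (induction N arbitrary: a) (auto simp: Dpow_Suc)
lemma Dpow_cong: "(\<And>k. k < N \<Longrightarrow> \<alpha> k = \<beta> k) \<Longrightarrow> Dpow D N \<alpha> a = Dpow D N \<beta> a"
  by (induction N arbitrary: a) (auto simp: Dpow_Suc)
lemma Dpow_upd: "k < N \<Longrightarrow> Dpow D N (\<alpha>(k := \<alpha> k + 1)) a = D k (Dpow D N \<alpha> a)"
proof (induction N arbitrary: a)
  case 0 then show ?case by simp
next
  case (Suc N)
  show ?case
  proof (cases "k = N")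
    case True
    have "Dpow D (Suc N) (\<alpha>(k := \<alpha> k + 1)) a = Dpow D N (\<alpha>(k := \<alpha> k + 1)) ((D N ^^ (\<alpha> N + 1)) a)"
      using True by (simp add: Dpow_Suc)
    also have "\<dots> = Dpow D N \<alpha> ((D N ^^ (\<alpha> N + 1)) a)"
      by (rule Dpow_cong) (use True in auto)
    also have "\<dots> = D k (Dpow D (Suc N) \<alpha> a)"
      using True by (simp add: Dpow_Suc Dpow_comm)
    finally show ?thesis .
  next
    case False
    then have "k < N" using Suc by simp
    then show ?thesis using Suc False by (simp add: Dpow_Suc)
  qed
qed
lemma Dpow_mono: "(\<And>k. k \<ge> N \<Longrightarrow> \<alpha> k = 0) \<Longrightarrow> N \<le> M \<Longrightarrow> Dpow D M \<alpha> a = Dpow D N \<alpha> a"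
proof (induction M arbitrary: a)
  case 0 then show ?case by simp
next
  case (Suc M)
  show ?case
  proof (cases "N = Suc M")
    case True then show ?thesis by simp
  next
    case False
    then have "N \<le> M" using Suc by simp
    then show ?thesis using Suc by (simp add: Dpow_Suc)
  qed
qed

lemma Dpow_zero[simp]: "Dpow D N \<alpha> 0 = 0"
  using Dpow_scale[of N \<alpha> 0 0] by simp
lemma Dpow_sum: "Dpow D N \<alpha> (sum f A) = (\<Sum>x\<in>A. Dpow D N \<alpha> (f x))"
  by (induction A rule: infinite_finite_induct) (auto simp: Dpow_add)


abbreviation P where "P m f \<equiv> miwa_coeff D m f"

lemma P_add: "P m (a + b) = P m a + P m b"
  by (simp add: miwa_coeff_def Dpow_add scaleR_add_right sum.distrib)
lemma P_scale: "P m (c *\<^sub>R a) = c *\<^sub>R P m a"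
  unfolding miwa_coeff_def by (simp add: Dpow_scale scaleR_sum_right mult.commute)
lemma P_zero[simp]: "P m 0 = 0"
  using P_scale[of m 0 0] by simp
lemma P_minus: "P m (a - b) = P m a - P m b"
  using P_add[of m "a - b" b] by (simp add: algebra_simps)
lemma P_uminus: "P m (- a) = - P m a"
  using P_minus[of m 0 a] by simp
lemma P_sum: "P m (sum f A) = (\<Sum>x\<in>A. P m (f x))"
  by (induction A rule: infinite_finite_induct) (auto simp: P_add)
lemma P_comm: "P m (D k a) = D k (P m a)"
  by (simp add: miwa_coeff_def D_sum D_scale Dpow_comm)
lemma P_0[simp]: "P 0 f = f"
proof -
  have "{\<alpha>::nat\<Rightarrow>nat. (\<forall>k\<ge>0. \<alpha> k = 0) \<and> oddwt 0 \<alpha> = 0} = {\<lambda>_. 0}"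
    by (auto simp: oddwt_def)
  then show ?thesis by (simp add: miwa_coeff_def)
qed

definition cf :: "nat \<Rightarrow> (nat \<Rightarrow> nat) \<Rightarrow> real" where
  "cf N \<alpha> = (\<Prod>k<N. (2 / real (2 * k + 1)) ^ \<alpha> k / fact (\<alpha> k))"
definition SS :: "nat \<Rightarrow> nat \<Rightarrow> (nat \<Rightarrow> nat) set" where
  "SS N m = {\<alpha>. (\<forall>k\<ge>N. \<alpha> k = 0) \<and> oddwt N \<alpha> = m}"

lemma oddwt_ge: "k < N \<Longrightarrow> (2*k+1) * \<alpha> k \<le> oddwt N \<alpha>"
  unfolding oddwt_def by (rule member_le_sum) auto

lemma oddwt_mono: "(\<And>k. k \<ge> N \<Longrightarrow> \<alpha> k = 0) \<Longrightarrow> N \<le> M \<Longrightarrow> oddwt M \<alpha> = oddwt N \<alpha>"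
  unfolding oddwt_def by (rule sum.mono_neutral_right) auto

lemma cf_mono: "(\<And>k. k \<ge> N \<Longrightarrow> \<alpha> k = 0) \<Longrightarrow> N \<le> M \<Longrightarrow> cf M \<alpha> = cf N \<alpha>"
  unfolding cf_def by (rule prod.mono_neutral_right) auto

lemma SS_finite: "finite (SS N m)"
proof -
  have "SS N m \<subseteq> {f. \<forall>x. (x \<in> {..<N} \<longrightarrow> f x \<in> {..m}) \<and> (x \<notin> {..<N} \<longrightarrow> f x = 0)}"
  proof (intro subsetI CollectI allI conjI impI)
    fix f x assume f: "f \<in> SS N m" and x: "x \<in> {..<N}"
    then have x: "x < N" by simp
    have "(2*x+1) * f x \<le> m" using oddwt_ge[OF x, of f] f by (simp add: SS_def)
    then have "f x \<le> m" by (metis le_trans mult_le_mono1 mult_1 le_add2)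
    then show "f x \<in> {..m}" by simp
  next
    fix f x assume f: "f \<in> SS N m" and x: "x \<notin> {..<N}"
    then show "f x = 0" by (simp add: SS_def)
  qed
  moreover have "finite {f. \<forall>x. (x \<in> {..<N} \<longrightarrow> f x \<in> {..m}) \<and> (x \<notin> {..<N} \<longrightarrow> f x = (0::nat))}"
    by (rule finite_set_of_finite_funs) auto
  ultimately show ?thesis by (rule finite_subset)
qed

lemma SS_lift: assumes "m \<le> N" shows "SS N m = SS m m"
proof safe
  fix \<alpha> assume a: "\<alpha> \<in> SS N m"
  have z: "\<alpha> k = 0" if "k \<ge> m" for k
  proof (cases "k < N")
    case True
    have "(2*k+1) * \<alpha> k \<le> m" using oddwt_ge[OF True, of \<alpha>] a by (simp add: SS_def)
    then show ?thesis using that by (cases "\<alpha> k") auto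
  next
    case False then show ?thesis using a by (simp add: SS_def)
  qed
  have "oddwt N \<alpha> = oddwt m \<alpha>" by (rule oddwt_mono) (use z assms in auto)
  then show "\<alpha> \<in> SS m m" using a z by (simp add: SS_def)
next
  fix \<alpha> assume a: "\<alpha> \<in> SS m m"
  have "oddwt N \<alpha> = oddwt m \<alpha>" by (rule oddwt_mono) (use a assms in \<open>auto simp: SS_def\<close>)
  then show "\<alpha> \<in> SS N m" using a assms by (auto simp: SS_def)
qed

lemma P_lift: assumes "m \<le> N"
  shows "P m f = (\<Sum>\<alpha>\<in>SS N m. cf N \<alpha> *\<^sub>R Dpow D N \<alpha> f)"
proof -
  have "P m f = (\<Sum>\<alpha>\<in>SS m m. cf m \<alpha> *\<^sub>R Dpow D m \<alpha> f)"
    by (simp add: miwa_coeff_def SS_def cf_def)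
  also have "\<dots> = (\<Sum>\<alpha>\<in>SS N m. cf N \<alpha> *\<^sub>R Dpow D N \<alpha> f)"
    unfolding SS_lift[OF assms]
  proof (rule sum.cong[OF refl])
    fix x assume "x \<in> SS m m"
    then have z: "\<And>k. k \<ge> m \<Longrightarrow> x k = 0" by (simp add: SS_def)
    show "cf m x *\<^sub>R Dpow D m x f = cf N x *\<^sub>R Dpow D N x f"
      using cf_mono[OF z assms] Dpow_mono[OF z assms] by simp
  qed
  finally show ?thesis .
qed

lemma oddwt_upd: assumes "k < N" shows "oddwt N (\<beta>(k := \<beta> k + 1)) = oddwt N \<beta> + (2*k+1)"
proof -
  have "\<And>i. (2*i+1)*((\<beta>(k := \<beta> k + 1)) i) = (2*i+1)*\<beta> i + (if i = k then 2*k+1 else 0)"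
    by auto
  then show ?thesis using assms by (simp add: oddwt_def sum.distrib)
qed

lemma cf_upd: assumes "k < N" shows "cf N (\<beta>(k := \<beta> k + 1)) = cf N \<beta> * (2 / real (2*k+1)) / real (\<beta> k + 1)"
proof -
  define g where "g i b = (2 / real (2 * i + 1)) ^ b / fact b" for i b
  define R where "R = (\<Prod>i\<in>{..<N}-{k}. g i (\<beta> i))"
  have k: "k \<in> {..<N}" using assms by simp
  have cfg: "cf N \<gamma> = (\<Prod>i\<in>{..<N}. g i (\<gamma> i))" for \<gamma> by (simp add: cf_def g_def)
  have e1: "cf N (\<beta>(k := \<beta> k + 1)) = g k (\<beta> k + 1) * R"
    unfolding cfg R_def by (subst prod.remove[OF _ k]) (auto intro!: prod.cong)
  have e2: "cf N \<beta> = g k (\<beta> k) * R"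
    unfolding cfg R_def by (subst prod.remove[OF _ k]) auto
  have e3: "g k (\<beta> k + 1) = g k (\<beta> k) * (2 / real (2*k+1)) / real (\<beta> k + 1)"
    by (simp add: g_def fact_Suc field_simps)
  show ?thesis unfolding e1 e2 e3 by simp
qed

lemma P_rec: "real (Suc m) *\<^sub>R P (Suc m) f = (\<Sum>k\<le>m div 2. 2 *\<^sub>R D k (P (m - 2*k) f))"
proof -
  define N where "N = Suc m"
  define I where "I k = (\<Sum>\<alpha>\<in>SS N (Suc m). (real ((2*k+1) * \<alpha> k) * cf N \<alpha>) *\<^sub>R Dpow D N \<alpha> f)" for k
  have "real (Suc m) *\<^sub>R P (Suc m) f = (\<Sum>\<alpha>\<in>SS N (Suc m). real (Suc m) *\<^sub>R (cf N \<alpha> *\<^sub>R Dpow D N \<alpha> f))"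
    using P_lift[of "Suc m" N f] by (simp add: N_def scaleR_sum_right)
  also have "\<dots> = (\<Sum>\<alpha>\<in>SS N (Suc m). \<Sum>k<N. (real ((2*k+1) * \<alpha> k) * cf N \<alpha>) *\<^sub>R Dpow D N \<alpha> f)"
  proof (rule sum.cong[OF refl])
    fix \<alpha> assume "\<alpha> \<in> SS N (Suc m)"
    then have "Suc m = (\<Sum>k<N. (2*k+1) * \<alpha> k)"
      by (simp add: SS_def oddwt_def)
    then have "real (Suc m) = (\<Sum>k<N. real ((2*k+1) * \<alpha> k))"
      by (metis of_nat_sum)
    then show "real (Suc m) *\<^sub>R (cf N \<alpha> *\<^sub>R Dpow D N \<alpha> f) = (\<Sum>k<N. (real ((2*k+1) * \<alpha> k) * cf N \<alpha>) *\<^sub>R Dpow D N \<alpha> f)"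
      by (simp add: scaleR_sum_left sum_distrib_right)
  qed
  also have "\<dots> = (\<Sum>k<N. I k)"
    unfolding I_def by (rule sum.swap)
  also have "\<dots> = (\<Sum>k<N. if 2*k \<le> m then 2 *\<^sub>R D k (P (m - 2*k) f) else 0)"
  proof (rule sum.cong[OF refl])
    fix k assume "k \<in> {..<N}"
    then have kN: "k < N" by simp
    show "I k = (if 2*k \<le> m then 2 *\<^sub>R D k (P (m - 2*k) f) else 0)"
    proof (cases "2*k \<le> m")
      case False
      have z: "\<alpha> k = 0" if "\<alpha> \<in> SS N (Suc m)" for \<alpha>
      proof -
        have "(2*k+1) * \<alpha> k \<le> Suc m" using oddwt_ge[OF kN, of \<alpha>] that by (simp add: SS_def)
        then show ?thesis using False by (cases "\<alpha> k") auto
      qed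
      have "I k = 0" unfolding I_def by (rule sum.neutral) (simp add: z)
      then show ?thesis using False by simp
    next
      case True
      define upd where "upd \<beta> = \<beta>(k := \<beta> k + 1)" for \<beta> :: "nat \<Rightarrow> nat"
      have "I k = (\<Sum>\<alpha>\<in>{\<alpha>\<in>SS N (Suc m). \<alpha> k \<noteq> 0}. (real ((2*k+1) * \<alpha> k) * cf N \<alpha>) *\<^sub>R Dpow D N \<alpha> f)"
        unfolding I_def by (rule sum.mono_neutral_right) (auto simp: SS_finite)
      also have "{\<alpha>\<in>SS N (Suc m). \<alpha> k \<noteq> 0} = upd ` SS N (m - 2*k)"
      proof (rule equalityI)
        show "{\<alpha>\<in>SS N (Suc m). \<alpha> k \<noteq> 0} \<subseteq> upd ` SS N (m - 2*k)"
        proof (rule subsetI)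
          fix \<alpha> assume "\<alpha> \<in> {\<alpha>\<in>SS N (Suc m). \<alpha> k \<noteq> 0}"
          then have a: "\<alpha> \<in> SS N (Suc m)" "\<alpha> k \<noteq> 0" by auto
          define \<beta> where "\<beta> = \<alpha>(k := \<alpha> k - 1)"
          have ua: "upd \<beta> = \<alpha>" using a by (auto simp: upd_def \<beta>_def)
          have "oddwt N \<alpha> = oddwt N \<beta> + (2*k+1)" using oddwt_upd[OF kN, of \<beta>] ua by (simp add: upd_def)
          then have "\<beta> \<in> SS N (m - 2*k)" using a kN by (auto simp: SS_def \<beta>_def)
          then show "\<alpha> \<in> upd ` SS N (m - 2*k)" using ua by blast
        qed
        show "upd ` SS N (m - 2*k) \<subseteq> {\<alpha>\<in>SS N (Suc m). \<alpha> k \<noteq> 0}"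
        proof (rule image_subsetI)
          fix \<beta> assume b: "\<beta> \<in> SS N (m - 2*k)"
          have "oddwt N (upd \<beta>) = Suc m" using oddwt_upd[OF kN, of \<beta>] b True by (simp add: SS_def upd_def)
          moreover have "\<forall>i\<ge>N. upd \<beta> i = 0" using b kN by (simp add: SS_def upd_def)
          ultimately show "upd \<beta> \<in> {\<alpha>\<in>SS N (Suc m). \<alpha> k \<noteq> 0}" by (simp add: SS_def upd_def)
        qed
      qed
      also have "(\<Sum>\<alpha>\<in>upd ` SS N (m - 2*k). (real ((2*k+1) * \<alpha> k) * cf N \<alpha>) *\<^sub>R Dpow D N \<alpha> f)
          = (\<Sum>\<beta>\<in>SS N (m - 2*k). (real ((2*k+1) * upd \<beta> k) * cf N (upd \<beta>)) *\<^sub>R Dpow D N (upd \<beta>) f)"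
      proof (rule sum.reindex[unfolded comp_def])
        show "inj_on upd (SS N (m - 2*k))"
        proof (rule inj_onI)
          fix x y assume eq: "upd x = upd y"
          show "x = y"
          proof
            fix i show "x i = y i" using fun_cong[OF eq, of i] by (cases "i = k") (auto simp: upd_def)
          qed
        qed
      qed
      also have "\<dots> = (\<Sum>\<beta>\<in>SS N (m - 2*k). 2 *\<^sub>R D k (cf N \<beta> *\<^sub>R Dpow D N \<beta> f))"
      proof (rule sum.cong[OF refl])
        fix \<beta>
        have "real ((2*k+1) * upd \<beta> k) * cf N (upd \<beta>) = 2 * cf N \<beta>"
        proof -
          have aux: "a \<noteq> 0 \<Longrightarrow> b \<noteq> 0 \<Longrightarrow> a * b * (c * (2 / a) / b) = 2 * c" for a b c :: real
            by (simp add: field_simps)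
          have "real ((2*k+1) * upd \<beta> k) = real (2*k+1) * real (\<beta> k + 1)" unfolding upd_def by (simp only: fun_upd_same of_nat_mult)
          then show ?thesis unfolding upd_def cf_upd[OF kN] by (simp only:) (rule aux, simp_all)
        qed
        then show "(real ((2*k+1) * upd \<beta> k) * cf N (upd \<beta>)) *\<^sub>R Dpow D N (upd \<beta>) f = 2 *\<^sub>R D k (cf N \<beta> *\<^sub>R Dpow D N \<beta> f)"
          using Dpow_upd[OF kN] by (simp add: upd_def D_scale)
      qed
      also have "\<dots> = 2 *\<^sub>R D k (P (m - 2*k) f)"
        using P_lift[of "m - 2*k" N f] by (simp add: N_def D_sum scaleR_sum_right)
      finally show ?thesis using True by simp
    qed
  qed
  also have "\<dots> = (\<Sum>k\<in>{k\<in>{..<N}. 2*k \<le> m}. 2 *\<^sub>R D k (P (m - 2*k) f))"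
    by (rule sum.inter_filter[symmetric]) simp
  also have "{k\<in>{..<N}. 2*k \<le> m} = {..m div 2}"
    by (auto simp: N_def)
  finally show ?thesis .
qed

end

lemma swap1: "(\<Sum>j\<le>(b::nat). \<Sum>k\<le>(b-j) div 2. f j k) = (\<Sum>k\<le>b div 2. \<Sum>j\<le>b-2*k. f j k)"
proof -
  have "(\<Sum>j\<le>b. \<Sum>k\<le>(b-j) div 2. f j k) = (\<Sum>j\<le>b. \<Sum>k\<in>{k. k \<in> {..b div 2} \<and> j + 2*k \<le> b}. f j k)"
    by (rule sum.cong[OF refl], rule sum.cong) auto
  also have "\<dots> = (\<Sum>k\<le>b div 2. \<Sum>j\<in>{j. j \<in> {..b} \<and> j + 2*k \<le> b}. f j k)"
    by (rule sum.swap_restrict) auto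
  also have "\<dots> = (\<Sum>k\<le>b div 2. \<Sum>j\<le>b-2*k. f j k)"
    by (rule sum.cong[OF refl], rule sum.cong) auto
  finally show ?thesis .
qed

lemma swap2: "(\<Sum>j\<le>(b::nat). \<Sum>k\<le>j div 2. f j k) = (\<Sum>k\<le>b div 2. \<Sum>j\<le>b-2*k. f (j + 2*k) k)"
proof -
  have "(\<Sum>j\<le>b. \<Sum>k\<le>j div 2. f j k) = (\<Sum>j\<le>b. \<Sum>k\<in>{k. k \<in> {..b div 2} \<and> 2*k \<le> j}. f j k)"
    by (rule sum.cong[OF refl], rule sum.cong) auto
  also have "\<dots> = (\<Sum>k\<le>b div 2. \<Sum>j\<in>{j. j \<in> {..b} \<and> 2*k \<le> j}. f j k)"
    by (rule sum.swap_restrict) auto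
  also have "\<dots> = (\<Sum>k\<le>b div 2. \<Sum>j\<le>b-2*k. f (j + 2*k) k)"
  proof (rule sum.cong[OF refl])
    fix k assume k: "k \<in> {..b div 2}"
    show "(\<Sum>j\<in>{j. j \<in> {..b} \<and> 2*k \<le> j}. f j k) = (\<Sum>j\<le>b-2*k. f (j + 2*k) k)"
      by (rule sum.reindex_bij_witness[where i="\<lambda>j. j + 2*k" and j="\<lambda>j. j - 2*k"]) (use k in auto)
  qed
  finally show ?thesis .
qed

definition ee :: "nat \<Rightarrow> real" where "ee j = (if j = 0 then 1 else 2)"

lemma ee_rec: "real (Suc m) * ee (Suc m) = (\<Sum>k\<le>m div 2. 2 * ee (m - 2*k))"
proof (induction m rule: nat_less_induct)
  case (1 m)
  show ?case
  proof (cases "m < 2")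
    case True
    then have "m = 0 \<or> m = 1" by auto
    then show ?thesis by (auto simp: ee_def)
  next
    case False
    then obtain n where m: "m = Suc (Suc n)" by (metis add_2_eq_Suc less_iff_Suc_add not_less_eq)
    have d: "m div 2 = Suc (n div 2)" using m by simp
    have "(\<Sum>k\<le>m div 2. 2 * ee (m - 2*k)) = 2 * ee m + (\<Sum>k\<le>n div 2. 2 * ee (n - 2*k))"
      unfolding d by (subst sum.atMost_Suc_shift) (simp add: m)
    also have "\<dots> = 2 * ee m + real (Suc n) * ee (Suc n)" using 1 m by simp
    finally show ?thesis using m by (simp add: ee_def)
  qed
qed

context dsetup begin


lemma P_one: "P m 1 = (if m = 0 then 1 else 0)"
proof (induction m rule: nat_less_induct)
  case (1 m)
  show ?case
  proof (cases m)
    case 0 then show ?thesis by simp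
  next
    case (Suc n)
    have "real (Suc n) *\<^sub>R P (Suc n) 1 = (\<Sum>k\<le>n div 2. 2 *\<^sub>R D k (P (n - 2*k) 1))"
      by (rule P_rec)
    also have "\<dots> = 0"
    proof (rule sum.neutral, rule ballI)
      fix k assume "k \<in> {..n div 2}"
      have "P (n - 2*k) 1 = (if n - 2*k = 0 then 1 else 0)" using 1 Suc by simp
      then show "2 *\<^sub>R D k (P (n - 2*k) 1) = 0" by simp
    qed
    finally show ?thesis using Suc by simp
  qed
qed

lemma P_mult: "P m (f * g) = (\<Sum>a\<le>m. P a f * P (m - a) g)"
proof (induction m rule: nat_less_induct)
  case (1 m)
  show ?case
  proof (cases m)
    case 0 then show ?thesis by simp
  next
    case (Suc n)
    define T where "T k j = 2 *\<^sub>R (D k (P j f) * P (n - 2*k - j) g) + 2 *\<^sub>R (P j f * D k (P (n - 2*k - j) g))" for k j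
    have "real (Suc n) *\<^sub>R P (Suc n) (f * g) = (\<Sum>k\<le>n div 2. 2 *\<^sub>R D k (P (n - 2*k) (f * g)))"
      by (rule P_rec)
    also have "\<dots> = (\<Sum>k\<le>n div 2. \<Sum>j\<le>n-2*k. T k j)"
    proof (rule sum.cong[OF refl])
      fix k assume "k \<in> {..n div 2}"
      have "P (n - 2*k) (f * g) = (\<Sum>a\<le>n - 2*k. P a f * P (n - 2*k - a) g)" using 1 Suc by simp
      then show "2 *\<^sub>R D k (P (n - 2*k) (f * g)) = (\<Sum>j\<le>n-2*k. T k j)"
        by (simp add: T_def D_sum D_mult scaleR_sum_right scaleR_add_right sum.distrib)
    qed
    also have "\<dots> = (\<Sum>k\<le>n div 2. \<Sum>j\<le>n-2*k. 2 *\<^sub>R (D k (P j f) * P (n - (j + 2*k)) g))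
       + (\<Sum>k\<le>n div 2. \<Sum>j\<le>n-2*k. 2 *\<^sub>R (P j f * D k (P (n - j - 2*k) g)))"
      unfolding T_def sum.distrib by (simp add: diff_diff_add add.commute)
    finally have L: "real (Suc n) *\<^sub>R P (Suc n) (f * g) = (\<Sum>k\<le>n div 2. \<Sum>j\<le>n-2*k. 2 *\<^sub>R (D k (P j f) * P (n - (j + 2*k)) g))
       + (\<Sum>k\<le>n div 2. \<Sum>j\<le>n-2*k. 2 *\<^sub>R (P j f * D k (P (n - j - 2*k) g)))" .
    have "(\<Sum>k\<le>n div 2. \<Sum>j\<le>n-2*k. 2 *\<^sub>R (D k (P j f) * P (n - (j + 2*k)) g))
       = (\<Sum>a\<le>n. \<Sum>k\<le>a div 2. 2 *\<^sub>R (D k (P (a - 2*k) f) * P (n - a) g))"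
      using swap2[of "\<lambda>a k. 2 *\<^sub>R (D k (P (a - 2*k) f) * P (n - a) g)" n] by simp
    also have "\<dots> = (\<Sum>a\<le>n. (real (Suc a) *\<^sub>R P (Suc a) f) * P (n - a) g)"
      by (rule sum.cong[OF refl]) (simp only: P_rec sum_distrib_right mult_scaleR_left)
    also have "\<dots> = (\<Sum>a\<le>Suc n. (real a *\<^sub>R P a f) * P (Suc n - a) g)"
      by (subst sum.atMost_Suc_shift) simp
    finally have X1: "(\<Sum>k\<le>n div 2. \<Sum>j\<le>n-2*k. 2 *\<^sub>R (D k (P j f) * P (n - (j + 2*k)) g))
       = (\<Sum>a\<le>Suc n. (real a *\<^sub>R P a f) * P (Suc n - a) g)" .
    have "(\<Sum>k\<le>n div 2. \<Sum>j\<le>n-2*k. 2 *\<^sub>R (P j f * D k (P (n - j - 2*k) g)))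
       = (\<Sum>a\<le>n. \<Sum>k\<le>(n - a) div 2. 2 *\<^sub>R (P a f * D k (P (n - a - 2*k) g)))"
      using swap1[of "\<lambda>a k. 2 *\<^sub>R (P a f * D k (P (n - a - 2*k) g))" n] by simp
    also have "\<dots> = (\<Sum>a\<le>n. P a f * (real (Suc (n - a)) *\<^sub>R P (Suc (n - a)) g))"
      by (rule sum.cong[OF refl]) (simp only: P_rec sum_distrib_left mult_scaleR_right)
    also have "\<dots> = (\<Sum>a\<le>Suc n. P a f * (real (Suc n - a) *\<^sub>R P (Suc n - a) g))"
      by (simp only: sum.atMost_Suc diff_self_eq_0 of_nat_0 scaleR_zero_left mult_zero_right add_0_right)
         (rule sum.cong[OF refl], simp add: Suc_diff_le)
    finally have X2: "(\<Sum>k\<le>n div 2. \<Sum>j\<le>n-2*k. 2 *\<^sub>R (P j f * D k (P (n - j - 2*k) g)))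
       = (\<Sum>a\<le>Suc n. P a f * (real (Suc n - a) *\<^sub>R P (Suc n - a) g))" .
    have C: "(\<Sum>a\<le>Suc n. (real a *\<^sub>R P a f) * P (Suc n - a) g) + (\<Sum>a\<le>Suc n. P a f * (real (Suc n - a) *\<^sub>R P (Suc n - a) g))
       = (\<Sum>a\<le>Suc n. real (Suc n) *\<^sub>R (P a f * P (Suc n - a) g))"
      unfolding sum.distrib[symmetric]
    proof (rule sum.cong[OF refl])
      fix a assume "a \<in> {..Suc n}"
      then have "real (Suc n) = real a + real (Suc n - a)" by simp
      then show "(real a *\<^sub>R P a f) * P (Suc n - a) g + P a f * (real (Suc n - a) *\<^sub>R P (Suc n - a) g)
          = real (Suc n) *\<^sub>R (P a f * P (Suc n - a) g)"
        by (simp only: scaleR_add_left mult_scaleR_left mult_scaleR_right)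
    qed
    have "real (Suc n) *\<^sub>R P (Suc n) (f * g) = real (Suc n) *\<^sub>R (\<Sum>a\<le>Suc n. P a f * P (Suc n - a) g)"
      unfolding L X1 X2 C scaleR_sum_right by (rule refl)
    then show ?thesis using Suc by simp
  qed
qed

end

definition msub :: "(nat \<Rightarrow> nat) \<Rightarrow> (nat \<Rightarrow> nat) set" where
  "msub \<alpha> = {\<beta>. \<forall>k. \<beta> k \<le> \<alpha> k}"
definition dif :: "(nat \<Rightarrow> nat) \<Rightarrow> (nat \<Rightarrow> nat) \<Rightarrow> (nat \<Rightarrow> nat)" where
  "dif \<alpha> \<beta> = (\<lambda>k. \<alpha> k - \<beta> k)"

lemma msub_finite: assumes "\<And>i. i \<ge> N \<Longrightarrow> \<alpha> i = 0" shows "finite (msub \<alpha>)"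
proof -
  let ?M = "\<Sum>i<N. \<alpha> i"
  have "msub \<alpha> \<subseteq> {f. \<forall>x. (x \<in> {..<N} \<longrightarrow> f x \<in> {..?M}) \<and> (x \<notin> {..<N} \<longrightarrow> f x = 0)}"
  proof (intro subsetI CollectI allI conjI impI)
    fix f x assume f: "f \<in> msub \<alpha>" and x: "x \<in> {..<N}"
    have "f x \<le> \<alpha> x" using f by (simp add: msub_def)
    also have "\<alpha> x \<le> ?M" by (rule member_le_sum) (use x in auto)
    finally show "f x \<in> {..?M}" by simp
  next
    fix f x assume f: "f \<in> msub \<alpha>" and x: "x \<notin> {..<N}"
    then show "f x = 0" using assms[of x] by (simp add: msub_def) (metis le_zero_eq)
  qed
  moreover have "finite {f. \<forall>x. (x \<in> {..<N} \<longrightarrow> f x \<in> {..?M}) \<and> (x \<notin> {..<N} \<longrightarrow> f x = (0::nat))}"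
    by (rule finite_set_of_finite_funs) auto
  ultimately show ?thesis by (rule finite_subset)
qed

lemma mfact_upd: assumes "k < N" shows "mfact N (\<beta>(k := \<beta> k + 1)) = real (\<beta> k + 1) * mfact N \<beta>"
proof -
  have k: "k \<in> {..<N}" using assms by simp
  define R where "R = (\<Prod>i\<in>{..<N}-{k}. fact (\<beta> i) :: real)"
  have e1: "mfact N (\<beta>(k := \<beta> k + 1)) = fact (\<beta> k + 1) * R"
    unfolding mfact_def R_def by (subst prod.remove[OF _ k]) (auto intro!: prod.cong)
  have e2: "mfact N \<beta> = fact (\<beta> k) * R"
    unfolding mfact_def R_def by (subst prod.remove[OF _ k]) auto
  show ?thesis unfolding e1 e2 by (simp add: fact_Suc)
qed

lemma mfact_pos: "mfact N \<beta> > 0"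
  unfolding mfact_def by (rule prod_pos) auto

lemma inv_aux1: "(r::real) \<noteq> 0 \<Longrightarrow> r * inverse (r * x * y) = inverse (x * y)"
  by (simp add: inverse_mult_distrib)
lemma inv_aux2: "(r::real) \<noteq> 0 \<Longrightarrow> r * inverse (x * (r * y)) = inverse (x * y)"
  by (simp add: inverse_mult_distrib)

lemma leibniz:
  fixes H :: "(nat \<Rightarrow> nat) \<Rightarrow> (nat \<Rightarrow> nat) \<Rightarrow> 'a::real_vector"
  assumes supp: "\<And>i. i \<ge> N \<Longrightarrow> \<alpha> i = 0" and kN: "k < N"
  shows "real (\<alpha> k + 1) *\<^sub>R (\<Sum>\<beta>\<in>msub (\<alpha>(k := \<alpha> k + 1)). inverse (mfact N \<beta> * mfact N (dif (\<alpha>(k := \<alpha> k + 1)) \<beta>)) *\<^sub>R H \<beta> (dif (\<alpha>(k := \<alpha> k + 1)) \<beta>))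
    = (\<Sum>\<beta>\<in>msub \<alpha>. inverse (mfact N \<beta> * mfact N (dif \<alpha> \<beta>)) *\<^sub>R (H (\<beta>(k := \<beta> k + 1)) (dif \<alpha> \<beta>) + H \<beta> ((dif \<alpha> \<beta>)(k := dif \<alpha> \<beta> k + 1))))"
proof -
  define a' where "a' = \<alpha>(k := \<alpha> k + 1)"
  define c where "c \<beta> \<gamma> = inverse (mfact N \<beta> * mfact N \<gamma>)" for \<beta> \<gamma>
  define upd where "upd \<beta> = \<beta>(k := \<beta> k + 1)" for \<beta> :: "nat \<Rightarrow> nat"
  have supp': "\<And>i. i \<ge> N \<Longrightarrow> a' i = 0" using supp kN by (auto simp: a'_def)
  have fin: "finite (msub a')" by (rule msub_finite[OF supp'])
  have finA: "finite (msub \<alpha>)" by (rule msub_finite[OF supp])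
  have "real (\<alpha> k + 1) *\<^sub>R (\<Sum>\<beta>\<in>msub a'. c \<beta> (dif a' \<beta>) *\<^sub>R H \<beta> (dif a' \<beta>))
     = (\<Sum>\<beta>\<in>msub a'. (real (\<beta> k) * c \<beta> (dif a' \<beta>)) *\<^sub>R H \<beta> (dif a' \<beta>))
     + (\<Sum>\<beta>\<in>msub a'. (real (dif a' \<beta> k) * c \<beta> (dif a' \<beta>)) *\<^sub>R H \<beta> (dif a' \<beta>))"
    unfolding scaleR_sum_right sum.distrib[symmetric]
  proof (rule sum.cong[OF refl])
    fix \<beta> assume "\<beta> \<in> msub a'"
    then have "\<beta> k \<le> a' k" by (simp add: msub_def)
    then have "\<beta> k \<le> \<alpha> k + 1" by (simp add: a'_def)
    then have "real (\<alpha> k + 1) = real (\<beta> k) + real (dif a' \<beta> k)" by (simp add: dif_def a'_def)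
    then show "real (\<alpha> k + 1) *\<^sub>R (c \<beta> (dif a' \<beta>) *\<^sub>R H \<beta> (dif a' \<beta>))
       = (real (\<beta> k) * c \<beta> (dif a' \<beta>)) *\<^sub>R H \<beta> (dif a' \<beta>) + (real (dif a' \<beta> k) * c \<beta> (dif a' \<beta>)) *\<^sub>R H \<beta> (dif a' \<beta>)"
      by (simp add: scaleR_add_left[symmetric] distrib_right)
  qed
  also have "(\<Sum>\<beta>\<in>msub a'. (real (\<beta> k) * c \<beta> (dif a' \<beta>)) *\<^sub>R H \<beta> (dif a' \<beta>))
      = (\<Sum>\<beta>\<in>msub \<alpha>. c \<beta> (dif \<alpha> \<beta>) *\<^sub>R H (upd \<beta>) (dif \<alpha> \<beta>))"
  proof -
    have "(\<Sum>\<beta>\<in>msub a'. (real (\<beta> k) * c \<beta> (dif a' \<beta>)) *\<^sub>R H \<beta> (dif a' \<beta>))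
        = (\<Sum>\<beta>\<in>upd ` msub \<alpha>. (real (\<beta> k) * c \<beta> (dif a' \<beta>)) *\<^sub>R H \<beta> (dif a' \<beta>))"
    proof (rule sum.mono_neutral_right[OF fin])
      show "upd ` msub \<alpha> \<subseteq> msub a'"
      proof (rule image_subsetI)
        fix \<beta> assume "\<beta> \<in> msub \<alpha>"
        then have le: "\<beta> i \<le> \<alpha> i" for i by (simp add: msub_def)
        have "upd \<beta> i \<le> a' i" for i using le[of i] by (cases "i = k") (simp_all add: upd_def a'_def)
        then show "upd \<beta> \<in> msub a'" by (simp add: msub_def)
      qed
      show "\<forall>i\<in>msub a' - upd ` msub \<alpha>. (real (i k) * c i (dif a' i)) *\<^sub>R H i (dif a' i) = 0"
      proof
        fix \<beta> assume b: "\<beta> \<in> msub a' - upd ` msub \<alpha>"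
        have "\<beta> k = 0"
        proof (rule ccontr)
          assume nz: "\<beta> k \<noteq> 0"
          define \<beta>0 where "\<beta>0 = \<beta>(k := \<beta> k - 1)"
          have "upd \<beta>0 = \<beta>" using nz by (auto simp: upd_def \<beta>0_def)
          moreover have "\<beta>0 \<in> msub \<alpha>"
          proof -
            have le: "\<beta> i \<le> a' i" for i using b by (simp add: msub_def)
            have "\<beta>0 i \<le> \<alpha> i" for i
            proof (cases "i = k")
              case True then show ?thesis using le[of k] by (simp add: \<beta>0_def a'_def)
            next
              case False then show ?thesis using le[of i] by (simp add: \<beta>0_def a'_def)
            qed
            then show ?thesis by (simp add: msub_def)
          qed
          ultimately show False using b by blast
        qed
        then show "(real (\<beta> k) * c \<beta> (dif a' \<beta>)) *\<^sub>R H \<beta> (dif a' \<beta>) = 0" by simp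
      qed
    qed
    also have "\<dots> = (\<Sum>\<beta>\<in>msub \<alpha>. (real (upd \<beta> k) * c (upd \<beta>) (dif a' (upd \<beta>))) *\<^sub>R H (upd \<beta>) (dif a' (upd \<beta>)))"
    proof (rule sum.reindex[unfolded comp_def])
      show "inj_on upd (msub \<alpha>)"
      proof (rule inj_onI)
        fix x y assume eq: "upd x = upd y"
        show "x = y"
        proof
          fix i show "x i = y i" using fun_cong[OF eq, of i] by (cases "i = k") (auto simp: upd_def)
        qed
      qed
    qed
    also have "\<dots> = (\<Sum>\<beta>\<in>msub \<alpha>. c \<beta> (dif \<alpha> \<beta>) *\<^sub>R H (upd \<beta>) (dif \<alpha> \<beta>))"
    proof (rule sum.cong[OF refl])
      fix \<beta> assume "\<beta> \<in> msub \<alpha>"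
      have d: "dif a' (upd \<beta>) = dif \<alpha> \<beta>" by (auto simp: dif_def a'_def upd_def)
      have "real (upd \<beta> k) * c (upd \<beta>) (dif \<alpha> \<beta>) = c \<beta> (dif \<alpha> \<beta>)"
        unfolding c_def upd_def mfact_upd[OF kN] by (simp only: fun_upd_same) (rule inv_aux1, simp)
      then show "(real (upd \<beta> k) * c (upd \<beta>) (dif a' (upd \<beta>))) *\<^sub>R H (upd \<beta>) (dif a' (upd \<beta>)) = c \<beta> (dif \<alpha> \<beta>) *\<^sub>R H (upd \<beta>) (dif \<alpha> \<beta>)"
        unfolding d by simp
    qed
    finally show ?thesis .
  qed
  also have "(\<Sum>\<beta>\<in>msub a'. (real (dif a' \<beta> k) * c \<beta> (dif a' \<beta>)) *\<^sub>R H \<beta> (dif a' \<beta>))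
      = (\<Sum>\<beta>\<in>msub \<alpha>. c \<beta> (dif \<alpha> \<beta>) *\<^sub>R H \<beta> (upd (dif \<alpha> \<beta>)))"
  proof -
    have "(\<Sum>\<beta>\<in>msub a'. (real (dif a' \<beta> k) * c \<beta> (dif a' \<beta>)) *\<^sub>R H \<beta> (dif a' \<beta>))
       = (\<Sum>\<beta>\<in>msub \<alpha>. (real (dif a' \<beta> k) * c \<beta> (dif a' \<beta>)) *\<^sub>R H \<beta> (dif a' \<beta>))"
    proof (rule sum.mono_neutral_right[OF fin])
      show "msub \<alpha> \<subseteq> msub a'"
      proof
        fix \<beta> assume "\<beta> \<in> msub \<alpha>"
        then have le: "\<beta> i \<le> \<alpha> i" for i by (simp add: msub_def)
        have "\<beta> i \<le> a' i" for i using le[of i] by (cases "i = k") (simp_all add: a'_def)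
        then show "\<beta> \<in> msub a'" by (simp add: msub_def)
      qed
      show "\<forall>i\<in>msub a' - msub \<alpha>. (real (dif a' i k) * c i (dif a' i)) *\<^sub>R H i (dif a' i) = 0"
      proof
        fix \<beta> assume b: "\<beta> \<in> msub a' - msub \<alpha>"
        then have le: "\<forall>i. \<beta> i \<le> a' i" and nle: "\<not> (\<forall>i. \<beta> i \<le> \<alpha> i)" by (auto simp: msub_def)
        then obtain i where i: "\<beta> i > \<alpha> i" by (auto simp: not_le)
        then have "i = k" using le[rule_format, of i] by (cases "i = k") (auto simp: a'_def)
        then have "\<beta> k = \<alpha> k + 1" using le[rule_format, of k] i by (simp add: a'_def)
        then show "(real (dif a' \<beta> k) * c \<beta> (dif a' \<beta>)) *\<^sub>R H \<beta> (dif a' \<beta>) = 0"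
          by (simp add: dif_def a'_def)
      qed
    qed
    also have "\<dots> = (\<Sum>\<beta>\<in>msub \<alpha>. c \<beta> (dif \<alpha> \<beta>) *\<^sub>R H \<beta> (upd (dif \<alpha> \<beta>)))"
    proof (rule sum.cong[OF refl])
      fix \<beta> assume "\<beta> \<in> msub \<alpha>"
      then have bk: "\<beta> k \<le> \<alpha> k" by (simp add: msub_def)
      have d: "dif a' \<beta> = upd (dif \<alpha> \<beta>)"
      proof
        fix i show "dif a' \<beta> i = upd (dif \<alpha> \<beta>) i" using bk by (cases "i = k") (auto simp: dif_def a'_def upd_def)
      qed
      have "real (upd (dif \<alpha> \<beta>) k) * c \<beta> (upd (dif \<alpha> \<beta>)) = c \<beta> (dif \<alpha> \<beta>)"
        unfolding c_def upd_def mfact_upd[OF kN] by (simp only: fun_upd_same) (rule inv_aux2, simp)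
      then show "(real (dif a' \<beta> k) * c \<beta> (dif a' \<beta>)) *\<^sub>R H \<beta> (dif a' \<beta>) = c \<beta> (dif \<alpha> \<beta>) *\<^sub>R H \<beta> (upd (dif \<alpha> \<beta>))"
        unfolding d by simp
    qed
    finally show ?thesis .
  qed
  finally have X: "real (\<alpha> k + 1) *\<^sub>R (\<Sum>\<beta>\<in>msub a'. c \<beta> (dif a' \<beta>) *\<^sub>R H \<beta> (dif a' \<beta>)) =
     (\<Sum>\<beta>\<in>msub \<alpha>. c \<beta> (dif \<alpha> \<beta>) *\<^sub>R H (upd \<beta>) (dif \<alpha> \<beta>)) + (\<Sum>\<beta>\<in>msub \<alpha>. c \<beta> (dif \<alpha> \<beta>) *\<^sub>R H \<beta> (upd (dif \<alpha> \<beta>)))" .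
  show ?thesis using X unfolding a'_def c_def upd_def scaleR_add_right sum.distrib .
qed

context dsetup begin

definition Q where
  "Q N Op w \<beta> \<gamma> b = (\<Sum>j\<le>b. ee j *\<^sub>R Op (\<lambda>n. P (b - j) (Dpow D N \<beta> (w n))) (oddwt N \<gamma> + j))"

definition Fgen where
  "Fgen N Op w \<alpha> b = (\<Sum>\<beta>\<in>msub \<alpha>. inverse (mfact N \<beta> * mfact N (dif \<alpha> \<beta>)) *\<^sub>R Q N Op w \<beta> (dif \<alpha> \<beta>) b)"

definition linop :: "((nat \<Rightarrow> 'r) \<Rightarrow> nat \<Rightarrow> 'r) \<Rightarrow> bool" where
  "linop Op \<longleftrightarrow> (\<forall>g h m. Op (\<lambda>n. g n + h n) m = Op g m + Op h m) \<and> (\<forall>c g m. Op (\<lambda>n. c *\<^sub>R g n) m = c *\<^sub>R Op g m)"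

lemma linop_add: "linop Op \<Longrightarrow> Op (\<lambda>n. g n + h n) m = Op g m + Op h m"
  by (simp add: linop_def)
lemma linop_scale: "linop Op \<Longrightarrow> Op (\<lambda>n. c *\<^sub>R g n) m = c *\<^sub>R Op g m"
  by (simp add: linop_def)
lemma linop_zero: "linop Op \<Longrightarrow> Op (\<lambda>n. 0) m = 0"
  using linop_scale[of Op 0 "\<lambda>_. 0" m] by simp
lemma linop_sum: "linop Op \<Longrightarrow> Op (\<lambda>n. \<Sum>x\<in>A. g x n) m = (\<Sum>x\<in>A. Op (g x) m)"
proof (induction A rule: infinite_finite_induct)
  case (infinite A) then show ?case by (simp add: linop_zero)
next
  case empty then show ?case by (simp add: linop_zero)
next
  case (insert x F)
  have "Op (\<lambda>n. g x n + (\<Sum>y\<in>F. g y n)) m = Op (g x) m + Op (\<lambda>n. \<Sum>y\<in>F. g y n) m"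
    by (rule linop_add[OF insert.prems])
  then show ?case using insert by simp
qed

lemma Q_rec:
  assumes Op: "linop Op" and bN: "b div 2 < N"
  shows "real (Suc b) *\<^sub>R Q N Op w \<beta> \<gamma> (Suc b)
    = (\<Sum>k\<le>b div 2. 2 *\<^sub>R (Q N Op w (\<beta>(k := \<beta> k + 1)) \<gamma> (b - 2*k) + Q N Op w \<beta> (\<gamma>(k := \<gamma> k + 1)) (b - 2*k)))"
proof -
  define X where "X n = Dpow D N \<beta> (w n)" for n
  define m where "m = oddwt N \<gamma>"
  define A where "A = (\<Sum>j\<le>Suc b. ee j *\<^sub>R Op (\<lambda>n. real (Suc b - j) *\<^sub>R P (Suc b - j) (X n)) (m + j))"
  define B where "B = (\<Sum>j\<le>Suc b. (real j * ee j) *\<^sub>R Op (\<lambda>n. P (Suc b - j) (X n)) (m + j))"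
  have "real (Suc b) *\<^sub>R Q N Op w \<beta> \<gamma> (Suc b) = A + B"
    unfolding Q_def A_def B_def X_def[symmetric] m_def[symmetric] scaleR_sum_right sum.distrib[symmetric]
  proof (rule sum.cong[OF refl])
    fix j assume "j \<in> {..Suc b}"
    then have r: "real (Suc b) = real (Suc b - j) + real j" by simp
    show "real (Suc b) *\<^sub>R ee j *\<^sub>R Op (\<lambda>n. P (Suc b - j) (X n)) (m + j) =
        ee j *\<^sub>R Op (\<lambda>n. real (Suc b - j) *\<^sub>R P (Suc b - j) (X n)) (m + j) +
        (real j * ee j) *\<^sub>R Op (\<lambda>n. P (Suc b - j) (X n)) (m + j)"
      unfolding linop_scale[OF Op] r by (simp add: scaleR_add_left algebra_simps)
  qed
  also have "A = (\<Sum>k\<le>b div 2. 2 *\<^sub>R Q N Op w (\<beta>(k := \<beta> k + 1)) \<gamma> (b - 2*k))"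
  proof -
    have "A = (\<Sum>j\<le>b. ee j *\<^sub>R Op (\<lambda>n. real (Suc (b - j)) *\<^sub>R P (Suc (b - j)) (X n)) (m + j))"
      unfolding A_def
      by (simp only: sum.atMost_Suc diff_self_eq_0 of_nat_0 scaleR_zero_left linop_zero[OF Op] scaleR_zero_right add_0_right)
         (rule sum.cong[OF refl], simp only: Suc_diff_le atMost_iff)
    also have "\<dots> = (\<Sum>j\<le>b. \<Sum>k\<le>(b - j) div 2. ee j *\<^sub>R 2 *\<^sub>R Op (\<lambda>n. P (b - 2*k - j) (Dpow D N (\<beta>(k := \<beta> k + 1)) (w n))) (m + j))"
    proof (rule sum.cong[OF refl])
      fix j assume j: "j \<in> {..b}"
      have "(\<lambda>n. real (Suc (b - j)) *\<^sub>R P (Suc (b - j)) (X n))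
          = (\<lambda>n. \<Sum>k\<le>(b - j) div 2. 2 *\<^sub>R P (b - 2*k - j) (Dpow D N (\<beta>(k := \<beta> k + 1)) (w n)))"
      proof
        fix n
        show "real (Suc (b - j)) *\<^sub>R P (Suc (b - j)) (X n)
          = (\<Sum>k\<le>(b - j) div 2. 2 *\<^sub>R P (b - 2*k - j) (Dpow D N (\<beta>(k := \<beta> k + 1)) (w n)))"
          unfolding P_rec
        proof (rule sum.cong[OF refl])
          fix k assume "k \<in> {..(b - j) div 2}"
          then have kN: "k < N" using bN j by auto
          have e: "b - 2*k - j = b - j - 2*k" by simp
          show "2 *\<^sub>R D k (P (b - j - 2 * k) (X n)) = 2 *\<^sub>R P (b - 2 * k - j) (Dpow D N (\<beta>(k := \<beta> k + 1)) (w n))"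
            unfolding e Dpow_upd[OF kN] P_comm X_def ..
        qed
      qed
      then show "ee j *\<^sub>R Op (\<lambda>n. real (Suc (b - j)) *\<^sub>R P (Suc (b - j)) (X n)) (m + j)
          = (\<Sum>k\<le>(b - j) div 2. ee j *\<^sub>R 2 *\<^sub>R Op (\<lambda>n. P (b - 2*k - j) (Dpow D N (\<beta>(k := \<beta> k + 1)) (w n))) (m + j))"
        by (simp add: linop_sum[OF Op] linop_scale[OF Op] scaleR_sum_right)
    qed
    also have "\<dots> = (\<Sum>k\<le>b div 2. \<Sum>j\<le>b - 2*k. ee j *\<^sub>R 2 *\<^sub>R Op (\<lambda>n. P (b - 2*k - j) (Dpow D N (\<beta>(k := \<beta> k + 1)) (w n))) (m + j))"
      by (rule swap1)
    also have "\<dots> = (\<Sum>k\<le>b div 2. 2 *\<^sub>R Q N Op w (\<beta>(k := \<beta> k + 1)) \<gamma> (b - 2*k))"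
      unfolding Q_def m_def scaleR_sum_right by (simp add: scaleR_left_commute mult.commute)
    finally show ?thesis .
  qed
  also have "B = (\<Sum>k\<le>b div 2. 2 *\<^sub>R Q N Op w \<beta> (\<gamma>(k := \<gamma> k + 1)) (b - 2*k))"
  proof -
    have "B = (\<Sum>j\<le>b. (real (Suc j) * ee (Suc j)) *\<^sub>R Op (\<lambda>n. P (b - j) (X n)) (m + Suc j))"
      unfolding B_def by (subst sum.atMost_Suc_shift) simp
    also have "\<dots> = (\<Sum>j\<le>b. \<Sum>k\<le>j div 2. (2 * ee (j - 2*k)) *\<^sub>R Op (\<lambda>n. P (b - j) (X n)) (m + Suc j))"
      unfolding ee_rec by (simp add: scaleR_sum_left)
    also have "\<dots> = (\<Sum>k\<le>b div 2. \<Sum>j\<le>b - 2*k. (2 * ee j) *\<^sub>R Op (\<lambda>n. P (b - (j + 2*k)) (X n)) (m + Suc (j + 2*k)))"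
      using swap2[of "\<lambda>j k. (2 * ee (j - 2*k)) *\<^sub>R Op (\<lambda>n. P (b - j) (X n)) (m + Suc j)" b] by simp
    also have "\<dots> = (\<Sum>k\<le>b div 2. 2 *\<^sub>R Q N Op w \<beta> (\<gamma>(k := \<gamma> k + 1)) (b - 2*k))"
    proof (rule sum.cong[OF refl])
      fix k assume "k \<in> {..b div 2}"
      then have kN: "k < N" using bN by auto
      show "(\<Sum>j\<le>b - 2*k. (2 * ee j) *\<^sub>R Op (\<lambda>n. P (b - (j + 2*k)) (X n)) (m + Suc (j + 2*k)))
          = 2 *\<^sub>R Q N Op w \<beta> (\<gamma>(k := \<gamma> k + 1)) (b - 2*k)"
        unfolding Q_def oddwt_upd[OF kN] m_def[symmetric] X_def[symmetric] scaleR_sum_right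
        by (rule sum.cong[OF refl]) (simp add: diff_diff_add add.commute add.left_commute)
    qed
    finally show ?thesis .
  qed
  finally show ?thesis unfolding scaleR_add_right sum.distrib .
qed

lemma Fgen_rec:
  assumes Op: "linop Op" and bN: "b div 2 < N" and supp: "\<And>i. i \<ge> N \<Longrightarrow> \<alpha> i = 0"
  shows "real (Suc b) *\<^sub>R Fgen N Op w \<alpha> (Suc b)
    = (\<Sum>k\<le>b div 2. 2 *\<^sub>R (real (\<alpha> k + 1) *\<^sub>R Fgen N Op w (\<alpha>(k := \<alpha> k + 1)) (b - 2*k)))"
proof -
  define c where "c \<beta> \<gamma> = inverse (mfact N \<beta> * mfact N \<gamma>)" for \<beta> \<gamma>
  have "real (Suc b) *\<^sub>R Fgen N Op w \<alpha> (Suc b)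
      = (\<Sum>\<beta>\<in>msub \<alpha>. c \<beta> (dif \<alpha> \<beta>) *\<^sub>R (real (Suc b) *\<^sub>R Q N Op w \<beta> (dif \<alpha> \<beta>) (Suc b)))"
    unfolding Fgen_def c_def scaleR_sum_right by (simp add: scaleR_left_commute mult.commute)
  also have "\<dots> = (\<Sum>\<beta>\<in>msub \<alpha>. \<Sum>k\<le>b div 2. 2 *\<^sub>R (c \<beta> (dif \<alpha> \<beta>) *\<^sub>R (Q N Op w (\<beta>(k := \<beta> k + 1)) (dif \<alpha> \<beta>) (b - 2*k)
        + Q N Op w \<beta> ((dif \<alpha> \<beta>)(k := dif \<alpha> \<beta> k + 1)) (b - 2*k))))"
    unfolding Q_rec[OF Op bN] scaleR_sum_right by (simp add: scaleR_left_commute mult.commute)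
  also have "\<dots> = (\<Sum>k\<le>b div 2. 2 *\<^sub>R (\<Sum>\<beta>\<in>msub \<alpha>. c \<beta> (dif \<alpha> \<beta>) *\<^sub>R (Q N Op w (\<beta>(k := \<beta> k + 1)) (dif \<alpha> \<beta>) (b - 2*k)
        + Q N Op w \<beta> ((dif \<alpha> \<beta>)(k := dif \<alpha> \<beta> k + 1)) (b - 2*k))))"
    unfolding scaleR_sum_right by (rule sum.swap)
  also have "\<dots> = (\<Sum>k\<le>b div 2. 2 *\<^sub>R (real (\<alpha> k + 1) *\<^sub>R Fgen N Op w (\<alpha>(k := \<alpha> k + 1)) (b - 2*k)))"
  proof (rule sum.cong[OF refl])
    fix k assume "k \<in> {..b div 2}"
    then have kN: "k < N" using bN by auto
    show "2 *\<^sub>R (\<Sum>\<beta>\<in>msub \<alpha>. c \<beta> (dif \<alpha> \<beta>) *\<^sub>R (Q N Op w (\<beta>(k := \<beta> k + 1)) (dif \<alpha> \<beta>) (b - 2*k)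
        + Q N Op w \<beta> ((dif \<alpha> \<beta>)(k := dif \<alpha> \<beta> k + 1)) (b - 2*k)))
      = 2 *\<^sub>R (real (\<alpha> k + 1) *\<^sub>R Fgen N Op w (\<alpha>(k := \<alpha> k + 1)) (b - 2*k))"
      unfolding Fgen_def c_def
      using leibniz[where N=N and \<alpha>=\<alpha> and k=k and H="\<lambda>\<beta> \<gamma>. Q N Op w \<beta> \<gamma> (b - 2*k)", OF supp kN] by simp
  qed
  finally show ?thesis .
qed

lemma Fgen_zero:
  assumes Op: "linop Op"
    and base: "\<And>\<alpha>. (\<And>i. i \<ge> N \<Longrightarrow> \<alpha> i = 0) \<Longrightarrow> Fgen N Op w \<alpha> 0 = 0"
  shows "b < 2*N \<Longrightarrow> (\<And>i. i \<ge> N \<Longrightarrow> \<alpha> i = 0) \<Longrightarrow> Fgen N Op w \<alpha> b = 0"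
proof (induction b arbitrary: \<alpha> rule: nat_less_induct)
  case (1 b)
  show ?case
  proof (cases b)
    case 0 then show ?thesis using base 1 by simp
  next
    case (Suc b')
    have bN: "b' div 2 < N" using 1 Suc by auto
    have supp: "\<And>i. i \<ge> N \<Longrightarrow> \<alpha> i = 0" by (rule "1.prems"(2))
    have "real (Suc b') *\<^sub>R Fgen N Op w \<alpha> (Suc b')
      = (\<Sum>k\<le>b' div 2. 2 *\<^sub>R (real (\<alpha> k + 1) *\<^sub>R Fgen N Op w (\<alpha>(k := \<alpha> k + 1)) (b' - 2*k)))"
      by (rule Fgen_rec[OF Op bN supp])
    also have "\<dots> = 0"
    proof (rule sum.neutral, rule ballI)
      fix k assume "k \<in> {..b' div 2}"
      then have kN: "k < N" using bN by auto
      have "Fgen N Op w (\<alpha>(k := \<alpha> k + 1)) (b' - 2*k) = 0"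
        using 1 Suc kN by auto
      then show "2 *\<^sub>R (real (\<alpha> k + 1) *\<^sub>R Fgen N Op w (\<alpha>(k := \<alpha> k + 1)) (b' - 2*k)) = 0" by simp
    qed
    finally show ?thesis using Suc by simp
  qed
qed

end

definition RES :: "(nat \<Rightarrow> 'r::real_algebra_1) \<Rightarrow> (nat \<Rightarrow> 'r) \<Rightarrow> nat \<Rightarrow> 'r" where
  "RES wt g m = (\<Sum>n\<le>m+1. g n * wt (m+1-n))"

context dsetup begin

lemma linop_RES: "linop (RES wt)"
  unfolding linop_def RES_def
  by (simp add: distrib_right sum.distrib scaleR_sum_right scaleR_add_right)

definition OpA where "OpA wt a g m = (\<Sum>j\<le>a. ee j *\<^sub>R RES wt (\<lambda>n. P (a - j) (g n)) (m + j))"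

lemma linop_OpA: "linop (OpA wt a)"
  unfolding linop_def OpA_def
  by (simp add: P_add P_scale linop_add[OF linop_RES] linop_scale[OF linop_RES] sum.distrib scaleR_sum_right scaleR_add_right scaleR_left_commute mult.commute)

lemma Q_0: fixes Op :: "(nat \<Rightarrow> 'r) \<Rightarrow> nat \<Rightarrow> 'r" shows "Q N Op w \<beta> \<gamma> 0 = Op (\<lambda>n. Dpow D N \<beta> (w n)) (oddwt N \<gamma>)"
  by (simp add: Q_def ee_def)

lemma Fgen_RES_base:
  assumes bil: "bilinear_identity D w wt" and supp: "\<And>i. i \<ge> N \<Longrightarrow> \<alpha> i = 0"
  shows "Fgen N (RES wt) w \<alpha> 0 = 0"
proof -
  have "\<forall>k\<ge>N. \<alpha> k = 0" using supp by simp
  then have "(\<Sum>\<beta>\<in>{\<beta>. \<forall>k. \<beta> k \<le> \<alpha> k}.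
           inverse (mfact N \<beta> * mfact N (\<lambda>k. \<alpha> k - \<beta> k)) *\<^sub>R
           (\<Sum>n\<le>oddwt N (\<lambda>k. \<alpha> k - \<beta> k) + 1.
               Dpow D N \<beta> (w n) * wt (oddwt N (\<lambda>k. \<alpha> k - \<beta> k) + 1 - n))) = 0"
    using bil unfolding bilinear_identity_def by blast
  then show ?thesis
    unfolding Fgen_def Q_0 RES_def msub_def dif_def by simp
qed

lemma Fgen_OpA_base: "Fgen N (OpA wt a) w \<alpha> 0 = Fgen N (RES wt) w \<alpha> a"
  unfolding Fgen_def Q_0 by (simp add: Q_def OpA_def)

lemma B_all:
  assumes bil: "bilinear_identity D w wt" and aN: "a < 2*N" and bN: "b < 2*N"
    and supp: "\<And>i. i \<ge> N \<Longrightarrow> \<alpha> i = 0"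
  shows "Fgen N (OpA wt a) w \<alpha> b = 0"
proof (rule Fgen_zero[OF linop_OpA _ bN supp])
  fix \<alpha>' :: "nat \<Rightarrow> nat" assume s: "\<And>i. i \<ge> N \<Longrightarrow> \<alpha>' i = 0"
  show "Fgen N (OpA wt a) w \<alpha>' 0 = 0"
    unfolding Fgen_OpA_base
    by (rule Fgen_zero[OF linop_RES _ aN s]) (rule Fgen_RES_base[OF bil])
qed

lemma Fgen_zeroidx: fixes Op :: "(nat \<Rightarrow> 'r) \<Rightarrow> nat \<Rightarrow> 'r" shows "Fgen N Op w (\<lambda>_. 0) b = (\<Sum>j\<le>b. ee j *\<^sub>R Op (\<lambda>n. P (b - j) (w n)) j)"
proof -
  have m: "msub (\<lambda>_. 0) = {\<lambda>_. 0}" by (auto simp: msub_def)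
  have d: "dif (\<lambda>_. 0) (\<lambda>_. 0) = (\<lambda>_. 0)" by (simp add: dif_def)
  show ?thesis unfolding Fgen_def m by (simp add: d mfact_def oddwt_def Q_def)
qed

lemma Fgen_e0:
  fixes Op :: "(nat \<Rightarrow> 'r) \<Rightarrow> nat \<Rightarrow> 'r"
  assumes N: "N \<ge> 1"
  shows "Fgen N Op w ((\<lambda>_. 0)(0 := 1)) b = (\<Sum>j\<le>b. ee j *\<^sub>R Op (\<lambda>n. P (b - j) (w n)) (1 + j))
     + (\<Sum>j\<le>b. ee j *\<^sub>R Op (\<lambda>n. P (b - j) (D 0 (w n))) j)"
proof -
  define e0 where "e0 = ((\<lambda>_. 0)(0 := 1) :: nat \<Rightarrow> nat)"
  have m: "msub e0 = {\<lambda>_. 0, e0}"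
  proof (rule equalityI)
    show "msub e0 \<subseteq> {\<lambda>_. 0, e0}"
    proof
      fix \<beta> assume b: "\<beta> \<in> msub e0"
      then have le: "\<beta> k \<le> e0 k" for k by (simp add: msub_def)
      show "\<beta> \<in> {\<lambda>_. 0, e0}"
      proof (cases "\<beta> 0 = 0")
        case True
        have "\<beta> k = 0" for k using le[of k] True by (cases "k = 0") (auto simp: e0_def)
        then show ?thesis by auto
      next
        case False
        then have "\<beta> 0 = 1" using le[of 0] by (simp add: e0_def)
        moreover have "\<beta> i = 0" if "i \<noteq> 0" for i using le[of i] that by (simp add: e0_def)
        ultimately have "\<beta> = e0" by (auto simp: e0_def)
        then show ?thesis by simp
      qed
    qed
    show "{\<lambda>_. 0, e0} \<subseteq> msub e0" by (auto simp: msub_def e0_def)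
  qed
  have ne: "(\<lambda>_. 0) \<noteq> e0" by (auto simp: e0_def fun_eq_iff)
  have mf0: "mfact N (\<lambda>_. 0) = 1" by (simp add: mfact_def)
  have mfe: "mfact N e0 = 1"
  proof -
    have "\<And>k. fact (e0 k) = (1::real)" by (simp add: e0_def)
    then show ?thesis by (simp add: mfact_def)
  qed
  have d1: "dif e0 (\<lambda>_. 0) = e0" by (simp add: dif_def)
  have d2: "dif e0 e0 = (\<lambda>_. 0)" by (simp add: dif_def)
  have ow: "oddwt N e0 = 1"
  proof -
    have "oddwt N e0 = (\<Sum>k<N. if k = 0 then 1 else 0)"
      unfolding oddwt_def by (rule sum.cong) (auto simp: e0_def)
    also have "\<dots> = 1" using N by simp
    finally show ?thesis .
  qed
  have ow0: "oddwt N (\<lambda>_. 0) = 0" by (simp add: oddwt_def)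
  have Dp: "Dpow D N e0 f = D 0 f" for f
  proof -
    have "Dpow D N ((\<lambda>_. 0)(0 := (\<lambda>_. 0::nat) 0 + 1)) f = D 0 (Dpow D N (\<lambda>_. 0) f)"
      by (rule Dpow_upd) (use N in simp)
    then show ?thesis by (simp add: e0_def)
  qed
  show ?thesis
    unfolding e0_def[symmetric] Fgen_def m
    using ne by (simp add: mf0 mfe d1 d2 ow ow0 Dp Q_def add.commute)
qed

theorem B3:
  assumes bil: "bilinear_identity D w wt"
  shows "(\<Sum>j\<le>q. ee j *\<^sub>R OpA wt p (\<lambda>n. P (q - j) (w n)) j) = 0"
  using B_all[OF bil, of p "p+q+1" q "\<lambda>_. 0"] by (simp add: Fgen_zeroidx)

theorem B4:
  assumes bil: "bilinear_identity D w wt"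
  shows "(\<Sum>j\<le>q. ee j *\<^sub>R OpA wt p (\<lambda>n. P (q - j) (w n)) (1 + j))
     + (\<Sum>j\<le>q. ee j *\<^sub>R OpA wt p (\<lambda>n. P (q - j) (D 0 (w n))) j) = 0"
proof -
  have z: "Fgen (p+q+1) (OpA wt p) w ((\<lambda>_. 0)(0 := 1)) q = 0" by (rule B_all[OF bil]) auto
  have e: "Fgen (p+q+1) (OpA wt p) w ((\<lambda>_. 0)(0 := 1)) q = (\<Sum>j\<le>q. ee j *\<^sub>R OpA wt p (\<lambda>n. P (q - j) (w n)) (1 + j))
     + (\<Sum>j\<le>q. ee j *\<^sub>R OpA wt p (\<lambda>n. P (q - j) (D 0 (w n))) j)" by (rule Fgen_e0) simp
  from z show ?thesis unfolding e .
qed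

end

unbundle fps_syntax

definition central :: "'a::ring_1 \<Rightarrow> bool" where "central c \<longleftrightarrow> (\<forall>x. c * x = x * c)"

lemma central_comm: "central c \<Longrightarrow> c * x = x * c"
  by (simp add: central_def)
lemma central_lcomm: assumes "central c" shows "c * (x * y) = x * (c * y)"
proof -
  have "c * (x * y) = (c * x) * y" by (simp add: mult.assoc)
  also have "\<dots> = (x * c) * y" using assms by (simp add: central_def)
  also have "\<dots> = x * (c * y)" by (simp add: mult.assoc)
  finally show ?thesis .
qed
lemma central_1[simp]: "central 1" and central_0[simp]: "central 0"
  by (simp_all add: central_def)
lemma central_mult[simp]: assumes "central a" "central b" shows "central (a * b)"
  unfolding central_def
proof
  fix x
  have "a * b * x = a * (b * x)" by (simp add: mult.assoc)
  also have "\<dots> = a * (x * b)" using assms(2) by (simp add: central_def)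
  also have "\<dots> = (a * x) * b" by (simp add: mult.assoc)
  also have "\<dots> = (x * a) * b" using assms(1) by (simp add: central_def)
  finally show "a * b * x = x * (a * b)" by (simp add: mult.assoc)
qed
lemma central_add[simp]: "central a \<Longrightarrow> central b \<Longrightarrow> central (a + b)"
  by (simp add: central_def distrib_left distrib_right)
lemma central_minus[simp]: "central a \<Longrightarrow> central b \<Longrightarrow> central (a - b)"
  by (simp add: central_def left_diff_distrib right_diff_distrib)
lemma central_uminus[simp]: "central a \<Longrightarrow> central (- a)"
  by (simp add: central_def)
lemma central_numeral[simp]: "central (numeral n)"
  unfolding central_def
proof
  fix x :: 'a
  have "of_nat (numeral n) * x = x * of_nat (numeral n)" by (rule mult_of_nat_commute)
  then show "numeral n * x = x * numeral n" by simp
qed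
lemma central_power[simp]: "central a \<Longrightarrow> central (a ^ n)"
  by (induction n) simp_all

lemma of_real_comm: "of_real c * (y::'a::real_algebra_1) = y * of_real c"
  by (simp add: of_real_def)

lemma central_fls_X[simp]: "central (fls_X :: 'a::ring_1 fls)"
  unfolding central_def by (simp add: fls_X_times_comm)
lemma central_fls_X_inv[simp]: "central (fls_X_inv :: 'a::ring_1 fls)"
  unfolding central_def by (simp add: fls_X_inv_times_comm)
lemma central_fls_const: "central c \<Longrightarrow> central (fls_const c)"
  unfolding central_def by (intro allI fls_eqI) (simp add: central_def)
lemma central_fls_const_of_real[simp]: "central (fls_const (of_real c :: 'a::real_algebra_1))"
  by (rule central_fls_const) (simp add: central_def of_real_comm)

lemma fls_X_inv_X[simp]: "fls_X_inv * (fls_X :: 'a::ring_1 fls) = 1"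
  by (intro fls_eqI) (simp add: fls_X_inv_times_conv_shift)
lemma fls_X_X_inv[simp]: "fls_X * (fls_X_inv :: 'a::ring_1 fls) = 1"
  by (intro fls_eqI) (simp add: fls_X_times_conv_shift)

lemma ser1_nth: "ser1 f $$ n = (if n < 0 then 0 else f (nat n))"
  by (simp add: ser1_def)
lemma ser1_eqI: assumes "\<And>p. f p = g p" shows "ser1 f = ser1 g"
proof -
  have "f = g" using assms by (rule ext)
  then show ?thesis by simp
qed
lemma ser1_add: "ser1 (\<lambda>p. f p + g p) = ser1 f + ser1 (g :: nat \<Rightarrow> 'a::ring_1)"
  by (intro fls_eqI) (simp add: ser1_nth)
lemma ser1_diff: "ser1 (\<lambda>p. f p - g p) = ser1 f - ser1 (g :: nat \<Rightarrow> 'a::ring_1)"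
  by (intro fls_eqI) (simp add: ser1_nth)
lemma ser1_uminus: "ser1 (\<lambda>p. - f p) = - ser1 (f :: nat \<Rightarrow> 'a::ring_1)"
  by (intro fls_eqI) (simp add: ser1_nth)
lemma ser1_const: "ser1 (\<lambda>p. if p = 0 then x else 0) = fls_const (x :: 'a::ring_1)"
  by (intro fls_eqI) (auto simp: ser1_nth)
lemma ser1_one: "ser1 (\<lambda>p. if p = 0 then 1 else 0) = (1 :: 'a::ring_1 fls)"
  using ser1_const[of 1] by simp
lemma ser1_lmult: "ser1 (\<lambda>p. x * f p) = fls_const x * ser1 (f :: nat \<Rightarrow> 'a::ring_1)"
  by (intro fls_eqI) (simp add: ser1_nth)
lemma ser1_rmult: "ser1 (\<lambda>p. f p * x) = ser1 f * fls_const (x :: 'a::ring_1)"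
  by (intro fls_eqI) (simp add: ser1_nth)
lemma ser1_scaleR: "ser1 (\<lambda>p. c *\<^sub>R f p) = fls_const (of_real c) * ser1 (f :: nat \<Rightarrow> 'a::real_algebra_1)"
  by (intro fls_eqI) (simp add: ser1_nth scaleR_conv_of_real)
lemma ser1_mult: "ser1 f * ser1 g = ser1 (\<lambda>p. \<Sum>i\<le>p. f i * g (p - i) :: 'a::ring_1)"
proof -
  have "Abs_fps f * Abs_fps g = Abs_fps (\<lambda>p. \<Sum>i\<le>p. f i * g (p - i))"
    by (rule fps_ext) (simp add: fps_mult_nth atLeast0AtMost)
  then show ?thesis unfolding ser1_def by (simp add: fls_times_fps_to_fls[symmetric])
qed
lemma ser1_X: "fls_X * ser1 f = ser1 (\<lambda>p. if p = 0 then 0 else f (p - 1) :: 'a::ring_1)"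
proof -
  have "fps_X * Abs_fps f = Abs_fps (\<lambda>p. if p = 0 then 0 else f (p - 1))"
    by (rule fps_ext) simp
  then have "fps_to_fls (fps_X * Abs_fps f) = fps_to_fls (Abs_fps (\<lambda>p. if p = 0 then 0 else f (p - 1)))" by simp
  then show ?thesis unfolding ser1_def fls_times_fps_to_fls by simp
qed

lemma tri_sum: "(\<Sum>i\<le>(p::nat). \<Sum>n\<le>i. f n (i - n) (p - i)) = (\<Sum>n\<le>p. \<Sum>i\<le>n. f i (p - n) (n - i))"
proof -
  have sw: "(\<Sum>i\<le>p. \<Sum>n\<le>i. g n i) = (\<Sum>n\<le>p. \<Sum>i\<in>{n..p}. g n i)" for g :: "nat \<Rightarrow> nat \<Rightarrow> 'a"
  proof -
    have "(\<Sum>i\<le>p. \<Sum>n\<le>i. g n i) = (\<Sum>i\<le>p. \<Sum>n\<in>{n. n \<in> {..p} \<and> n \<le> i}. g n i)"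
      by (rule sum.cong[OF refl], rule sum.cong) auto
    also have "\<dots> = (\<Sum>n\<le>p. \<Sum>i\<in>{i. i \<in> {..p} \<and> n \<le> i}. g n i)"
      by (rule sum.swap_restrict) auto
    also have "\<dots> = (\<Sum>n\<le>p. \<Sum>i\<in>{n..p}. g n i)"
      by (rule sum.cong[OF refl], rule sum.cong) auto
    finally show ?thesis .
  qed
  have "(\<Sum>i\<le>p. \<Sum>n\<le>i. f n (i - n) (p - i)) = (\<Sum>x\<le>p. \<Sum>i\<in>{x..p}. f x (i - x) (p - i))"
    by (rule sw)
  also have "\<dots> = (\<Sum>x\<le>p. \<Sum>n\<in>{x..p}. f x (p - n) (n - x))"
  proof (rule sum.cong[OF refl])
    fix x assume x: "x \<in> {..p}"
    show "(\<Sum>i\<in>{x..p}. f x (i - x) (p - i)) = (\<Sum>n\<in>{x..p}. f x (p - n) (n - x))"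
      by (rule sum.reindex_bij_witness[where i="\<lambda>n. p + x - n" and j="\<lambda>i. p + x - i"]) (use x in auto)
  qed
  also have "\<dots> = (\<Sum>n\<le>p. \<Sum>i\<le>n. f i (p - n) (n - i))"
    by (rule sw[symmetric])
  finally show ?thesis .
qed

definition SerL1 :: "(nat \<Rightarrow> nat \<Rightarrow> 'a::ring_1) \<Rightarrow> 'a fls" where
  "SerL1 T = ser1 (\<lambda>p. \<Sum>n\<le>p. T n (p - n))"

lemma SerL1_split: "SerL1 T = ser1 (T 0) + fls_X * SerL1 (\<lambda>n. T (Suc n))"
  unfolding SerL1_def ser1_X ser1_add[symmetric]
proof (rule ser1_eqI)
  fix p show "(\<Sum>n\<le>p. T n (p - n)) = T 0 p + (if p = 0 then 0 else \<Sum>n\<le>p - 1. T (Suc n) (p - 1 - n))"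
  proof (cases p)
    case 0 then show ?thesis by simp
  next
    case (Suc m)
    have "(\<Sum>n\<le>Suc m. T n (Suc m - n)) = T 0 (Suc m) + (\<Sum>n\<le>m. T (Suc n) (Suc m - Suc n))"
      by (simp only: sum.atMost_Suc_shift diff_zero)
    then show ?thesis using Suc by simp
  qed
qed

lemma SerL1_add: "SerL1 (\<lambda>n p. T n p + U n p) = SerL1 T + SerL1 U"
  unfolding SerL1_def ser1_add[symmetric] by (simp add: sum.distrib)

lemma G1_half:
  fixes T :: "nat \<Rightarrow> nat \<Rightarrow> 'a::real_algebra_1"
  assumes G: "\<And>p. (\<Sum>j\<le>p. ee j *\<^sub>R T (Suc j) (p - j)) = 0"
  shows "SerL1 (\<lambda>n. T (Suc n)) = fls_const (of_real (1/2)) * ser1 (T 1)"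
  unfolding SerL1_def ser1_scaleR[symmetric]
proof (rule ser1_eqI)
  fix p
  have "(\<Sum>j\<le>p. ee j *\<^sub>R T (Suc j) (p - j)) = (\<Sum>j\<le>p. 2 *\<^sub>R T (Suc j) (p - j)) - T 1 p"
  proof -
    have "(\<Sum>j\<le>p. ee j *\<^sub>R T (Suc j) (p - j)) = (\<Sum>j\<le>p. 2 *\<^sub>R T (Suc j) (p - j) - (if j = 0 then T (Suc j) (p - j) else 0))"
      by (rule sum.cong) (auto simp: ee_def scaleR_2)
    also have "\<dots> = (\<Sum>j\<le>p. 2 *\<^sub>R T (Suc j) (p - j)) - T 1 p"
      by (simp add: sum_subtractf)
    finally show ?thesis .
  qed
  then have "2 *\<^sub>R (\<Sum>j\<le>p. T (Suc j) (p - j)) - T 1 p = 0" using G[of p] by (simp add: scaleR_sum_right)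
  then have "2 *\<^sub>R (\<Sum>j\<le>p. T (Suc j) (p - j)) = T 1 p" by simp
  then have "(1/2::real) *\<^sub>R (2 *\<^sub>R (\<Sum>j\<le>p. T (Suc j) (p - j))) = (1/2) *\<^sub>R T 1 p" by simp
  then show "(\<Sum>n\<le>p. T (Suc n) (p - n)) = (1/2) *\<^sub>R T 1 p" by simp
qed

context dsetup begin

definition T1 :: "(nat \<Rightarrow> 'r) \<Rightarrow> (nat \<Rightarrow> 'r) \<Rightarrow> nat \<Rightarrow> nat \<Rightarrow> 'r" where "T1 wt g n p = (\<Sum>i\<le>n. P p (g i) * wt (n - i))"

lemma shser1_prod: "shser1 D g * ser1 wt = SerL1 (T1 wt g)"
proof -
  have e: "shser1 D g = ser1 (\<lambda>N. \<Sum>n\<le>N. P (N - n) (g n))" by (simp add: shser1_def ser1_def)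
  show ?thesis
    unfolding e ser1_mult SerL1_def T1_def
  proof (rule ser1_eqI)
    fix p
    show "(\<Sum>i\<le>p. (\<Sum>n\<le>i. P (i - n) (g n)) * wt (p - i)) = (\<Sum>n\<le>p. \<Sum>i\<le>n. P (p - n) (g i) * wt (n - i))"
      using tri_sum[of "\<lambda>x y z. P y (g x) * wt z" p] by (simp add: sum_distrib_right)
  qed
qed

lemma miwa1_ser1: "miwa1 D f = ser1 (\<lambda>p. P p f)"
  by (simp add: miwa1_def ser1_def)

end

unbundle fps_syntax

context dsetup begin

lemma OpA_T1: "OpA wt p g m = (\<Sum>j\<le>p. ee j *\<^sub>R T1 wt g (Suc (m + j)) (p - j))"
  by (simp add: OpA_def RES_def T1_def)

lemma G1_w: assumes bil: "bilinear_identity D w wt"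
  shows "(\<Sum>j\<le>p. ee j *\<^sub>R T1 wt w (Suc j) (p - j)) = 0"
  using B3[OF bil, of p 0] by (simp add: OpA_T1 ee_def)

lemma G1_b: assumes bil: "bilinear_identity D w wt"
  shows "(\<Sum>j\<le>p. ee j *\<^sub>R (\<lambda>n p. T1 wt w (Suc n) p + T1 wt (\<lambda>i. D 0 (w i)) n p) (Suc j) (p - j)) = 0"
  using B4[OF bil, of p 0] by (simp add: OpA_T1 ee_def scaleR_add_right sum.distrib)

lemma P_D0_one: "P p (D 0 1) = 0" by simp

lemma T1_0: assumes "w 0 = 1" "wt 0 = 1" shows "T1 wt w 0 p = (if p = 0 then 1 else 0)"
  using assms by (simp add: T1_def P_one atMost_0)

lemma T1_1: assumes "w 0 = 1" "wt 0 = 1"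
  shows "T1 wt w 1 p = (if p = 0 then wt 1 else 0) + P p (w 1)"
  using assms by (simp add: T1_def P_one)

lemma T1_2: assumes "w 0 = 1" "wt 0 = 1"
  shows "T1 wt w 2 p = (if p = 0 then wt 2 else 0) + P p (w 1) * wt 1 + P p (w 2)"
  using assms by (simp add: T1_def P_one numeral_2_eq_2 add.assoc)

lemma T1_D0_0: assumes "w 0 = 1" "wt 0 = 1" shows "T1 wt (\<lambda>i. D 0 (w i)) 0 p = 0"
  using assms by (simp add: T1_def atMost_0)

lemma T1_D0_1: assumes "w 0 = 1" "wt 0 = 1" shows "T1 wt (\<lambda>i. D 0 (w i)) 1 p = P p (D 0 (w 1))"
  using assms by (simp add: T1_def)

lemma wt1: assumes bil: "bilinear_identity D w wt" and "w 0 = 1" "wt 0 = 1"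
  shows "wt 1 = - w 1"
proof -
  have "T1 wt w 1 0 = 0" using G1_w[OF bil, of 0] by (simp add: ee_def)
  then show ?thesis using T1_1[where w=w and wt=wt and p=0, OF assms(2,3)] by (simp add: add_eq_0_iff)
qed

lemma wt2: assumes bil: "bilinear_identity D w wt" and "w 0 = 1" "wt 0 = 1"
  shows "wt 2 + w 1 * wt 1 + w 2 + D 0 (w 1) = 0"
proof -
  have "T1 wt w 2 0 + T1 wt (\<lambda>i. D 0 (w i)) 1 0 = 0" using G1_b[OF bil, of 0] by (simp add: ee_def numeral_2_eq_2)
  then show ?thesis using T1_2[where w=w and wt=wt and p=0, OF assms(2,3)] T1_D0_1[where w=w and wt=wt and p=0, OF assms(2,3)] by (simp add: add.assoc)
qed

lemma miwa1_add: "miwa1 D (a + b) = miwa1 D a + miwa1 D b"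
  by (simp add: miwa1_ser1 P_add ser1_add)
lemma miwa1_diff: "miwa1 D (a - b) = miwa1 D a - miwa1 D b"
  by (simp add: miwa1_ser1 P_minus ser1_diff)
lemma miwa1_uminus: "miwa1 D (- a) = - miwa1 D a"
  by (simp add: miwa1_ser1 P_uminus ser1_uminus)
lemma miwa1_scale: "miwa1 D (c *\<^sub>R a) = fls_const (of_real c) * miwa1 D a"
  by (simp add: miwa1_ser1 P_scale ser1_scaleR)
lemma miwa1_mult: "miwa1 D (a * b) = miwa1 D a * miwa1 D b"
  by (simp add: miwa1_ser1 P_mult ser1_mult)

end

lemma fls_const_add: "fls_const (a + b) = fls_const a + fls_const (b::'a::ring_1)"
  by (intro fls_eqI) simp
lemma fls_const_diff: "fls_const (a - b) = fls_const a - fls_const (b::'a::ring_1)"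
  by (intro fls_eqI) simp
lemma fls_const_mult: "fls_const (a * b) = fls_const a * fls_const (b::'a::ring_1)"
  by simp
lemma fls_const_scaleR: "fls_const (c *\<^sub>R x) = fls_const (of_real c) * fls_const (x::'a::real_algebra_1)"
  by (simp add: scaleR_conv_of_real)

lemma half_half: "(1/2::real) *\<^sub>R Y + (1/2) *\<^sub>R Y = (Y::'a::real_vector)"
  by (simp add: scaleR_add_left[symmetric])

lemma hh1: "fls_const (of_real (1/2)) + fls_const (of_real (1/2)) = (1::'a::real_algebra_1 fls)"
proof -
  have "fls_const (of_real (1/2)) + fls_const (of_real (1/2)) = fls_const (of_real (1/2 + 1/2) :: 'a)"
    by (simp only: of_real_add fls_const_add)
  then show ?thesis by simp
qed

lemma hhq: "fls_const (of_real (1/2)) * fls_const (of_real (1/2)) = (fls_const (of_real (1/4)) ::'a::real_algebra_1 fls)"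
  by (simp add: of_real_mult[symmetric])

context dsetup begin

lemma conj_ii:
  assumes bil: "bilinear_identity D w wt" and w0: "w 0 = 1" and wt0: "wt 0 = 1"
    and phi_def: "\<phi> = - w 1"
    and F1_def: "F1 = 1 - fls_const (of_real (1/2)) * fls_X * (miwa1 D \<phi> - fls_const \<phi>)"
  shows "shser1 D w * ser1 wt = F1"
proof -
  define h :: "'r fls" where "h = fls_const (of_real (1/2))"
  have ch: "central h" by (simp add: h_def)
  have wt1': "wt 1 = \<phi>" using wt1[OF bil w0 wt0] phi_def by simp
  have "shser1 D w * ser1 wt = ser1 (T1 wt w 0) + fls_X * SerL1 (\<lambda>n. T1 wt w (Suc n))"
    unfolding shser1_prod by (rule SerL1_split)
  also have "ser1 (T1 wt w 0) = 1"
    unfolding T1_0[where w=w and wt=wt, OF w0 wt0] by (rule ser1_one)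
  also have "SerL1 (\<lambda>n. T1 wt w (Suc n)) = h * ser1 (T1 wt w 1)"
    unfolding h_def by (rule G1_half) (rule G1_w[OF bil])
  also have "ser1 (T1 wt w 1) = fls_const \<phi> - miwa1 D \<phi>"
    unfolding T1_1[where w=w and wt=wt, OF w0 wt0] ser1_add ser1_const wt1' miwa1_ser1[symmetric] phi_def miwa1_uminus by simp
  finally have L: "shser1 D w * ser1 wt = 1 + fls_X * (h * (fls_const \<phi> - miwa1 D \<phi>))" .
  have "fls_X * (h * (fls_const \<phi> - miwa1 D \<phi>)) = - (h * fls_X * (miwa1 D \<phi> - fls_const \<phi>))"
    using central_lcomm[OF ch, of fls_X] by (simp add: algebra_simps)
  then show ?thesis unfolding L F1_def h_def[symmetric] by simp
qed

lemma conj_iii: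
  assumes bil: "bilinear_identity D w wt" and w0: "w 0 = 1" and wt0: "wt 0 = 1"
    and phi_def: "\<phi> = - w 1"
    and thetat_def: "w 2 = - \<theta>t + (1/2) *\<^sub>R (D 0 \<phi> + \<phi> * \<phi>)"
    and thetac_def: "\<theta>c = \<theta>t + (1/2) *\<^sub>R D 0 \<phi>"
    and F1_def: "F1 = 1 - fls_const (of_real (1/2)) * fls_X * (miwa1 D \<phi> - fls_const \<phi>)"
  shows "(shser1 D (\<lambda>n. D 0 (w n)) + fls_X_inv * shser1 D w) * ser1 wt
           = fls_X_inv * F1\<^sup>2
             - fls_const (of_real (1/2)) * fls_X * (miwa1 D \<theta>c - fls_const \<theta>c)
             + fls_const (of_real (1/4)) * fls_X * commut (fls_const \<phi>) (miwa1 D \<phi>)"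
proof -
  define h :: "'r fls" where "h = fls_const (of_real (1/2))"
  have ch: "central h" by (simp add: h_def)
  have q: "fls_const (of_real (1/4)) = h * h" unfolding h_def by (rule hhq[symmetric])
  have hh: "h + h = 1" unfolding h_def by (rule hh1)
  define M where "M = miwa1 D \<phi>"
  define A3 where "A3 = fls_const \<phi>"
  define A1 where "A1 = fls_const \<theta>t"
  define A2 where "A2 = fls_const (D 0 \<phi>)"
  define A5 where "A5 = miwa1 D \<theta>t"
  define A6 where "A6 = miwa1 D (D 0 \<phi>)"
  define Tb where "Tb n p = T1 wt w (Suc n) p + T1 wt (\<lambda>i. D 0 (w i)) n p" for n p
  have wt1': "wt 1 = \<phi>" using wt1[OF bil w0 wt0] phi_def by simp
  have w1: "w 1 = - \<phi>" using phi_def by simp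
  have wt1s: "wt (Suc 0) = \<phi>" using wt1' by simp
  have w1s: "w (Suc 0) = - \<phi>" using w1 by simp
  have wt2': "wt 2 = \<theta>t + (1/2) *\<^sub>R (D 0 \<phi> + \<phi> * \<phi>)"
  proof -
    have e0: "wt 2 + w 1 * wt 1 + w 2 + D 0 (w 1) = 0" by (rule wt2[OF bil w0 wt0])
    have "wt 2 = (wt 2 + w 1 * wt 1 + w 2 + D 0 (w 1)) - w 1 * wt 1 - w 2 - D 0 (w 1)"
      by (simp add: algebra_simps)
    also have "\<dots> = - (w 1 * wt 1) - w 2 - D 0 (w 1)" unfolding e0 by simp
    finally have "wt 2 = - (w 1 * wt 1) - w 2 - D 0 (w 1)" .
    also have "\<dots> = \<theta>t + ((D 0 \<phi> + \<phi> * \<phi>) - (1/2) *\<^sub>R (D 0 \<phi> + \<phi> * \<phi>))"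
      unfolding thetat_def w1 wt1' by (simp add: D_uminus algebra_simps)
    also have "(D 0 \<phi> + \<phi> * \<phi>) - (1/2) *\<^sub>R (D 0 \<phi> + \<phi> * \<phi>) = (1/2) *\<^sub>R (D 0 \<phi> + \<phi> * \<phi>)"
      using half_half[of "D 0 \<phi> + \<phi> * \<phi>"] by (simp add: algebra_simps)
    finally show ?thesis .
  qed
  have LHS1: "(shser1 D (\<lambda>n. D 0 (w n)) + fls_X_inv * shser1 D w) * ser1 wt
      = SerL1 (T1 wt (\<lambda>i. D 0 (w i))) + fls_X_inv * SerL1 (T1 wt w)"
    by (simp add: distrib_right mult.assoc shser1_prod)
  have S2: "SerL1 (T1 wt w) = 1 + fls_X * SerL1 (\<lambda>n. T1 wt w (Suc n))"
    unfolding SerL1_split[of "T1 wt w"] T1_0[where w=w and wt=wt, OF w0 wt0] ser1_one ..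
  have "fls_X_inv * SerL1 (T1 wt w) = fls_X_inv + SerL1 (\<lambda>n. T1 wt w (Suc n))"
    unfolding S2 by (simp add: distrib_left mult.assoc[symmetric])
  then have LHS2: "(shser1 D (\<lambda>n. D 0 (w n)) + fls_X_inv * shser1 D w) * ser1 wt = fls_X_inv + SerL1 Tb"
    unfolding LHS1 Tb_def SerL1_add by (simp add: algebra_simps)
  have STb: "SerL1 Tb = ser1 (Tb 0) + fls_X * (h * ser1 (Tb 1))"
    unfolding SerL1_split[of Tb] h_def
    using G1_half[of Tb, OF G1_b[OF bil, unfolded Tb_def[symmetric]]] by simp
  have Tb0: "ser1 (Tb 0) = A3 - M"
  proof -
    have e: "Tb 0 = (\<lambda>p. (if p = 0 then \<phi> else 0) - P p \<phi>)"
      unfolding Tb_def by (rule ext) (simp add: T1_1[where w=w and wt=wt, OF w0 wt0, unfolded One_nat_def] T1_D0_0[where w=w and wt=wt, OF w0 wt0] wt1s w1s P_uminus)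
    show ?thesis unfolding e ser1_diff ser1_const A3_def M_def miwa1_ser1 ..
  qed
  have Tb1: "ser1 (Tb 1) = fls_const (wt 2) - M * A3 + miwa1 D (w 2) - A6"
  proof -
    have e: "Tb 1 = (\<lambda>p. (if p = 0 then wt 2 else 0) - P p \<phi> * \<phi> + P p (w 2) - P p (D 0 \<phi>))"
      unfolding Tb_def by (rule ext) (simp add: T1_2[where w=w and wt=wt, OF w0 wt0, unfolded numeral_2_eq_2] T1_D0_1[where w=w and wt=wt, OF w0 wt0, unfolded One_nat_def] wt1s w1s P_uminus D_uminus numeral_2_eq_2)
    show ?thesis unfolding e ser1_add ser1_diff ser1_const ser1_rmult A3_def M_def A6_def miwa1_ser1 ..
  qed
  have Cwt2: "fls_const (wt 2) = A1 + h * A2 + h * (A3 * A3)"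
    unfolding wt2' fls_const_add fls_const_scaleR fls_const_mult A1_def A2_def A3_def h_def by (simp add: distrib_left)
  have mw2: "miwa1 D (w 2) = - A5 + h * A6 + h * (M * M)"
    unfolding thetat_def miwa1_add miwa1_uminus miwa1_scale miwa1_mult A5_def A6_def M_def h_def by (simp add: distrib_left)
  have mtc: "miwa1 D \<theta>c = A5 + h * A6"
    unfolding thetac_def miwa1_add miwa1_scale A5_def A6_def h_def ..
  have ctc: "fls_const \<theta>c = A1 + h * A2"
    unfolding thetac_def fls_const_add fls_const_scaleR A1_def A2_def h_def ..
  have F1': "F1 = 1 - h * fls_X * (M - A3)" unfolding F1_def h_def M_def A3_def ..
  have LHS3: "(shser1 D (\<lambda>n. D 0 (w n)) + fls_X_inv * shser1 D w) * ser1 wt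
     = fls_X_inv + (A3 - M) + fls_X * (h * (A1 + h * A2 + h * (A3 * A3) - M * A3 + (- A5 + h * A6 + h * (M * M)) - A6))"
    unfolding LHS2 STb Tb0 Tb1 Cwt2 mw2 by (simp only: add.assoc)
  have RHS3: "fls_X_inv * F1\<^sup>2 - fls_const (of_real (1/2)) * fls_X * (miwa1 D \<theta>c - fls_const \<theta>c)
       + fls_const (of_real (1/4)) * fls_X * commut (fls_const \<phi>) (miwa1 D \<phi>)
     = fls_X_inv * ((1 - h * fls_X * (M - A3)) * (1 - h * fls_X * (M - A3))) - h * fls_X * (A5 + h * A6 - (A1 + h * A2))
       + h * h * fls_X * (A3 * M - M * A3)"
    unfolding F1' power2_eq_square mtc ctc q h_def[symmetric] commut_def A3_def[symmetric] M_def[symmetric] ..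
  have X: "fls_X_inv * (fls_X * y) = y" for y :: "'r fls" by (simp add: mult.assoc[symmetric])
  have diff: "fls_X_inv + (A3 - M) + fls_X * (h * (A1 + h * A2 + h * (A3 * A3) - M * A3 + (- A5 + h * A6 + h * (M * M)) - A6))
     - (fls_X_inv * ((1 - h * fls_X * (M - A3)) * (1 - h * fls_X * (M - A3))) - h * fls_X * (A5 + h * A6 - (A1 + h * A2))
       + h * h * fls_X * (A3 * M - M * A3))
     = (h + h - 1) * (M - A3 + h * fls_X * (M * A3 + A6))"
  proof -
    have cX: "central (fls_X :: 'r fls)" and cXi: "central (fls_X_inv :: 'r fls)" by simp_all
    note rules = central_comm[OF cX, symmetric] central_lcomm[OF cX, symmetric]
       central_comm[OF cXi, symmetric] central_lcomm[OF cXi, symmetric]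
       central_comm[OF ch, symmetric] central_lcomm[OF ch, symmetric]
    have hX: "h * fls_X = fls_X * h" "h * (fls_X * z) = fls_X * (h * z)" for z
      using central_comm[OF ch] central_lcomm[OF ch] by auto
    have hXi: "h * fls_X_inv = fls_X_inv * h" "h * (fls_X_inv * z) = fls_X_inv * (h * z)" for z
      using central_comm[OF ch] central_lcomm[OF ch] by auto
    show ?thesis
      by (simp add: algebra_simps X hX hXi rules[where x=M] rules[where x=A1] rules[where x=A2] rules[where x=A3]
         rules[where x=A5] rules[where x=A6])
  qed
  show ?thesis unfolding LHS3 RHS3 using diff unfolding hh by simp
qed

end

unbundle fps_syntax

lemma bivar_ser1: "bivar c = ser1 (\<lambda>b. ser1 (\<lambda>a. c a b))"
  by (simp add: bivar_def ser1_def)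

lemma bivar_eqI: "(\<And>a b. c a b = d a b) \<Longrightarrow> bivar c = bivar d"
  unfolding bivar_ser1 by (intro ser1_eqI) simp

lemma ser1_zero: "ser1 (\<lambda>p. 0) = (0 :: 'a::ring_1 fls)"
  by (intro fls_eqI) (simp add: ser1_nth)

lemma ser1_sum: "ser1 (\<lambda>p. \<Sum>i\<in>A. f i p) = (\<Sum>i\<in>A. ser1 (f i) :: 'a::ring_1 fls)"
  by (induction A rule: infinite_finite_induct) (simp_all add: ser1_add ser1_zero)

lemma bivar_add: "bivar (\<lambda>a b. c a b + d a b) = bivar c + bivar (d :: nat \<Rightarrow> nat \<Rightarrow> 'a::ring_1)"
  unfolding bivar_ser1 by (simp add: ser1_add)
lemma bivar_diff: "bivar (\<lambda>a b. c a b - d a b) = bivar c - bivar (d :: nat \<Rightarrow> nat \<Rightarrow> 'a::ring_1)"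
  unfolding bivar_ser1 by (simp add: ser1_diff)
lemma bivar_uminus: "bivar (\<lambda>a b. - c a b) = - bivar (c :: nat \<Rightarrow> nat \<Rightarrow> 'a::ring_1)"
  unfolding bivar_ser1 by (simp add: ser1_uminus)
lemma bivar_zero: "bivar (\<lambda>a b. 0) = (0 :: 'a::ring_1 fls fls)"
  unfolding bivar_ser1 by (simp add: ser1_zero)

lemma bivar_mult: "bivar c * bivar d = bivar (\<lambda>a b. \<Sum>i\<le>b. \<Sum>k\<le>a. c k i * d (a - k) (b - i) :: 'a::ring_1)"
  unfolding bivar_ser1 ser1_mult
  by (intro ser1_eqI) (simp add: ser1_mult ser1_sum)

lemma bivar_lconst: "C2 x * bivar c = bivar (\<lambda>a b. x * c a b :: 'a::ring_1)"
  unfolding bivar_ser1 C2_def ser1_lmult[symmetric] by (simp add: ser1_lmult)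
lemma bivar_rconst: "bivar c * C2 x = bivar (\<lambda>a b. c a b * x :: 'a::ring_1)"
  unfolding bivar_ser1 C2_def ser1_rmult[symmetric] by (simp add: ser1_rmult)
lemma bivar_const: "bivar (\<lambda>a b. if a = 0 \<and> b = 0 then x else 0) = C2 (x :: 'a::ring_1)"
proof -
  have e: "(\<lambda>b. ser1 (\<lambda>a. if a = 0 \<and> b = 0 then x else 0)) = (\<lambda>b. if b = 0 then fls_const x else 0)"
    by (rule ext) (simp add: ser1_const ser1_zero)
  show ?thesis unfolding bivar_ser1 C2_def e by (rule ser1_const)
qed
lemma bivar_Lam: "Lam * bivar c = bivar (\<lambda>a b. if a = 0 then 0 else c (a - 1) b :: 'a::ring_1)"
  unfolding bivar_ser1 Lam_def ser1_lmult[symmetric] by (simp add: ser1_X)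
lemma bivar_Mu: "Mu * bivar c = bivar (\<lambda>a b. if b = 0 then 0 else c a (b - 1) :: 'a::ring_1)"
proof -
  have "(\<lambda>b. if b = 0 then 0 else ser1 (\<lambda>a. c a (b - 1))) = (\<lambda>b. ser1 (\<lambda>a. if b = 0 then 0 else c a (b - 1)))"
    by (rule ext) (simp add: ser1_zero)
  then show ?thesis unfolding bivar_ser1 Mu_def ser1_X by simp
qed

lemma central_Lam[simp]: "central (Lam :: 'a::ring_1 fls fls)"
  unfolding Lam_def by (rule central_fls_const) simp
lemma central_Mu[simp]: "central (Mu :: 'a::ring_1 fls fls)"
  unfolding Mu_def by simp
lemma central_Lam_inv[simp]: "central (Lam_inv :: 'a::ring_1 fls fls)"
  unfolding Lam_inv_def by (rule central_fls_const) simp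
lemma central_Mu_inv[simp]: "central (Mu_inv :: 'a::ring_1 fls fls)"
  unfolding Mu_inv_def by simp
lemma central_C2[simp]: "central (C2 (of_real c) :: 'a::real_algebra_1 fls fls)"
  unfolding C2_def by (rule central_fls_const) simp

lemma Lam_Lam_inv: "Lam * Lam_inv = (1 :: 'a::ring_1 fls fls)"
  unfolding Lam_def Lam_inv_def by simp
lemma Mu_Mu_inv: "Mu * Mu_inv = (1 :: 'a::ring_1 fls fls)"
  unfolding Mu_def Mu_inv_def by simp

lemma C2_add: "C2 (a + b) = C2 a + C2 (b :: 'a::ring_1)"
  unfolding C2_def by (simp add: fls_const_add)
lemma C2_diff: "C2 (a - b) = C2 a - C2 (b :: 'a::ring_1)"
  unfolding C2_def by (simp add: fls_const_diff)
lemma C2_mult: "C2 (a * b) = C2 a * C2 (b :: 'a::ring_1)"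
  unfolding C2_def by simp
lemma C2_one: "C2 1 = (1 :: 'a::ring_1 fls fls)"
  unfolding C2_def by simp
lemma C2_scaleR: "C2 (c *\<^sub>R x) = C2 (of_real c) * C2 (x :: 'a::real_algebra_1)"
  unfolding C2_def by (simp add: fls_const_scaleR)

lemma hh2: "C2 (of_real (1/2)) + C2 (of_real (1/2)) = (1::'a::real_algebra_1 fls fls)"
proof -
  have "C2 (of_real (1/2)) + C2 (of_real (1/2)) = C2 (of_real (1/2 + 1/2) :: 'a)"
    by (simp only: of_real_add C2_add)
  then show ?thesis by (simp add: C2_one)
qed
lemma hhq2: "C2 (of_real (1/2)) * C2 (of_real (1/2)) = (C2 (of_real (1/4)) ::'a::real_algebra_1 fls fls)"
  unfolding C2_mult[symmetric] of_real_mult[symmetric] by simp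

definition u0 :: "'a::ring_1 fls fls" where
  "u0 = ser1 (\<lambda>b. (- 1) ^ b * fls_X_inv ^ Suc b)"

lemma LM_u0: "(Lam + Mu) * u0 = (1 :: 'a::ring_1 fls fls)"
proof -
  have c: "fls_X * ((- 1) ^ b * fls_X_inv ^ Suc b) = (- 1) ^ b * (fls_X_inv ^ b :: 'a fls)" for b
  proof -
    have "fls_X * ((- 1) ^ b * fls_X_inv ^ Suc b) = (- 1) ^ b * (fls_X * fls_X_inv ^ Suc b :: 'a fls)"
      using central_lcomm[OF central_fls_X] by simp
    also have "fls_X * fls_X_inv ^ Suc b = (fls_X_inv ^ b :: 'a fls)"
      by (simp add: mult.assoc[symmetric])
    finally show ?thesis .
  qed
  have "(Lam + Mu) * u0 = ser1 (\<lambda>b. fls_X * ((- 1) ^ b * fls_X_inv ^ Suc b)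
      + (if b = 0 then 0 else (- 1) ^ (b - 1) * fls_X_inv ^ Suc (b - 1)) :: 'a fls)"
    unfolding u0_def distrib_right Lam_def Mu_def ser1_lmult[symmetric] ser1_X ser1_add ..
  also have "\<dots> = ser1 (\<lambda>b. if b = 0 then 1 else 0)"
  proof (rule ser1_eqI)
    fix b :: nat
    show "fls_X * ((- 1) ^ b * fls_X_inv ^ Suc b) + (if b = 0 then 0 else (- 1) ^ (b - 1) * fls_X_inv ^ Suc (b - 1))
        = (if b = 0 then 1 else (0 :: 'a fls))"
    proof (cases b)
      case 0 then show ?thesis by simp
    next
      case (Suc n)
      then show ?thesis unfolding c by simp
    qed
  qed
  also have "\<dots> = 1" by (rule ser1_one)
  finally show ?thesis .
qed

lemma central_LM: "central (Lam + Mu :: 'a::ring_1 fls fls)" by simp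

lemma u0_LM: "u0 * (Lam + Mu) = (1 :: 'a::ring_1 fls fls)"
proof -
  have "u0 * (Lam + Mu) = (Lam + Mu) * (u0 :: 'a fls fls)" by (rule central_comm[OF central_LM, symmetric])
  also have "\<dots> = 1" by (rule LM_u0)
  finally show ?thesis .
qed

lemma uinv_LM: "uinv (Lam + Mu) = (u0 :: 'a::ring_1 fls fls)"
  unfolding uinv_def
proof (rule the_equality)
  show "(Lam + Mu) * u0 = 1 \<and> u0 * (Lam + Mu) = (1 :: 'a fls fls)" using LM_u0 u0_LM by simp
next
  fix y :: "'a fls fls" assume y: "(Lam + Mu) * y = 1 \<and> y * (Lam + Mu) = 1"
  have "y = y * ((Lam + Mu) * u0)" by (subst LM_u0) simp
  also have "\<dots> = (y * (Lam + Mu)) * u0" by (simp add: mult.assoc)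
  also have "\<dots> = u0" using y by (simp only: mult_1_left)
  finally show "y = u0" .
qed

lemma central_u0[simp]: "central (u0 :: 'a::ring_1 fls fls)"
  unfolding central_def
proof
  fix x :: "'a fls fls"
  have "u0 * x = u0 * x * ((Lam + Mu) * u0)" by (subst LM_u0) simp
  also have "\<dots> = u0 * (x * (Lam + Mu)) * u0" by (simp add: mult.assoc)
  also have "\<dots> = u0 * ((Lam + Mu) * x) * u0" using central_comm[OF central_LM, of x] by simp
  also have "\<dots> = (u0 * (Lam + Mu)) * x * u0" by (simp add: mult.assoc)
  also have "\<dots> = x * u0" by (subst u0_LM) simp
  finally show "u0 * x = x * u0" .
qed

unbundle fps_syntax

definition SerM :: "(nat \<Rightarrow> nat \<Rightarrow> nat \<Rightarrow> 'a::ring_1) \<Rightarrow> 'a fls fls" where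
  "SerM T = bivar (\<lambda>a b. \<Sum>n\<le>b. T n a (b - n))"
definition SerL2 :: "(nat \<Rightarrow> nat \<Rightarrow> nat \<Rightarrow> 'a::ring_1) \<Rightarrow> 'a fls fls" where
  "SerL2 T = bivar (\<lambda>a b. \<Sum>n\<le>a. T n (a - n) b)"
definition W2 :: "(nat \<Rightarrow> nat \<Rightarrow> nat \<Rightarrow> 'a::ring_1) \<Rightarrow> 'a fls fls" where
  "W2 T = bivar (\<lambda>a b. \<Sum>j1\<le>a. \<Sum>j2\<le>b. T (j1 + j2 + 1) (a - j1) (b - j2))"
definition A2 :: "(nat \<Rightarrow> nat \<Rightarrow> nat \<Rightarrow> 'a::ring_1) \<Rightarrow> nat \<Rightarrow> 'a fls fls" where
  "A2 T n = bivar (T n)"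

lemma SerM_add: "SerM (\<lambda>n a b. T n a b + U n a b) = SerM T + SerM U"
  unfolding SerM_def bivar_add[symmetric] by (simp add: sum.distrib)
lemma SerL2_add: "SerL2 (\<lambda>n a b. T n a b + U n a b) = SerL2 T + SerL2 U"
  unfolding SerL2_def bivar_add[symmetric] by (simp add: sum.distrib)

lemma splitM: "SerM T = A2 T 0 + Mu * SerM (\<lambda>n. T (Suc n))"
  unfolding SerM_def A2_def bivar_Mu bivar_add[symmetric]
proof (rule bivar_eqI)
  fix a b
  show "(\<Sum>n\<le>b. T n a (b - n)) = T 0 a b + (if b = 0 then 0 else \<Sum>n\<le>b - 1. T (Suc n) a (b - 1 - n))"
  proof (cases b)
    case (Suc m)
    have "(\<Sum>n\<le>Suc m. T n a (Suc m - n)) = T 0 a (Suc m) + (\<Sum>n\<le>m. T (Suc n) a (Suc m - Suc n))"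
      by (simp only: sum.atMost_Suc_shift diff_zero)
    then show ?thesis using Suc by simp
  qed simp
qed

lemma splitL: "SerL2 T = A2 T 0 + Lam * SerL2 (\<lambda>n. T (Suc n))"
  unfolding SerL2_def A2_def bivar_Lam bivar_add[symmetric]
proof (rule bivar_eqI)
  fix a b
  show "(\<Sum>n\<le>a. T n (a - n) b) = T 0 a b + (if a = 0 then 0 else \<Sum>n\<le>a - 1. T (Suc n) (a - 1 - n) b)"
  proof (cases a)
    case (Suc m)
    have "(\<Sum>n\<le>Suc m. T n (Suc m - n) b) = T 0 (Suc m) b + (\<Sum>n\<le>m. T (Suc n) (Suc m - Suc n) b)"
      by (simp only: sum.atMost_Suc_shift diff_zero)
    then show ?thesis using Suc by simp
  qed simp
qed

lemma Wrel: "(Lam - Mu) * W2 T = Lam * SerL2 (\<lambda>n. T (Suc n)) - Mu * SerM (\<lambda>n. T (Suc n))"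
  unfolding left_diff_distrib W2_def SerL2_def SerM_def bivar_Lam bivar_Mu bivar_diff[symmetric]
proof (rule bivar_eqI)
  fix a b
  define Wc where "Wc a b = (\<Sum>j1\<le>a. \<Sum>j2\<le>b. T (j1 + j2 + 1) (a - j1) (b - j2))" for a b
  define Lc where "Lc a b = (\<Sum>n\<le>a. T (Suc n) (a - n) b)" for a b
  define Mc where "Mc a b = (\<Sum>n\<le>b. T (Suc n) a (b - n))" for a b
  have W0: "Wc 0 b = Mc 0 b" for b by (simp add: Wc_def Mc_def)
  have W0': "Wc a 0 = Lc a 0" for a by (simp add: Wc_def Lc_def)
  have WS: "Wc a' (Suc b') - Wc (Suc a') b' = Lc a' (Suc b') - Mc (Suc a') b'" for a' b'
  proof -
    define R where "R = (\<Sum>j1\<le>a'. \<Sum>j2\<le>b'. T (j1 + j2 + 2) (a' - j1) (b' - j2))"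
    have "Wc a' (Suc b') = (\<Sum>j1\<le>a'. T (j1 + 1) (a' - j1) (Suc b') + (\<Sum>j2\<le>b'. T (j1 + Suc j2 + 1) (a' - j1) (Suc b' - Suc j2)))"
      unfolding Wc_def by (rule sum.cong[OF refl]) (simp only: sum.atMost_Suc_shift add_0_right diff_zero)
    also have "\<dots> = Lc a' (Suc b') + R"
      unfolding Lc_def R_def sum.distrib by (simp add: add.commute add.left_commute)
    finally have e1: "Wc a' (Suc b') = Lc a' (Suc b') + R" .
    have "Wc (Suc a') b' = (\<Sum>j2\<le>b'. T (j2 + 1) (Suc a') (b' - j2)) + (\<Sum>j1\<le>a'. \<Sum>j2\<le>b'. T (Suc j1 + j2 + 1) (Suc a' - Suc j1) (b' - j2))"
      unfolding Wc_def by (simp only: sum.atMost_Suc_shift add_0_left diff_zero)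
    also have "\<dots> = Mc (Suc a') b' + R"
      unfolding Mc_def R_def by (simp add: add.commute add.left_commute)
    finally have e2: "Wc (Suc a') b' = Mc (Suc a') b' + R" .
    show ?thesis unfolding e1 e2 by simp
  qed
  show "(if a = 0 then 0 else Wc (a - 1) b) - (if b = 0 then 0 else Wc a (b - 1))
      = (if a = 0 then 0 else Lc (a - 1) b) - (if b = 0 then 0 else Mc a (b - 1))"
    unfolding Wc_def[symmetric] Lc_def[symmetric] Mc_def[symmetric]
  proof (cases a; cases b)
    fix a' b' assume "a = Suc a'" "b = Suc b'"
    then show ?thesis using WS[of a' b'] by simp
  qed (simp_all add: W0 W0')
qed

lemma ee_sum: "(\<Sum>j\<le>n. ee j *\<^sub>R f j) = 2 *\<^sub>R (\<Sum>j\<le>n. f j) - (f 0 :: 'a::real_vector)"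
proof -
  have "(\<Sum>j\<le>n. ee j *\<^sub>R f j) = (\<Sum>j\<le>n. 2 *\<^sub>R f j - (if j = 0 then f j else 0))"
    by (rule sum.cong) (auto simp: ee_def scaleR_2)
  also have "\<dots> = 2 *\<^sub>R (\<Sum>j\<le>n. f j) - f 0"
    by (simp add: sum_subtractf scaleR_sum_right)
  finally show ?thesis .
qed

lemma Grel:
  fixes T :: "nat \<Rightarrow> nat \<Rightarrow> nat \<Rightarrow> 'a::real_algebra_1"
  assumes G: "\<And>p q. (\<Sum>j2\<le>q. ee j2 *\<^sub>R (\<Sum>j1\<le>p. ee j1 *\<^sub>R T (j1 + j2 + 1) (p - j1) (q - j2))) = 0"
  shows "W2 T = C2 (of_real (1/2)) * SerL2 (\<lambda>n. T (Suc n)) + C2 (of_real (1/2)) * SerM (\<lambda>n. T (Suc n))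
     - C2 (of_real (1/4)) * A2 T 1"
  unfolding W2_def SerL2_def SerM_def A2_def bivar_lconst bivar_add[symmetric] bivar_diff[symmetric]
proof (rule bivar_eqI)
  fix a b
  define X where "X j1 j2 = T (j1 + j2 + 1) (a - j1) (b - j2)" for j1 j2
  define Wc where "Wc = (\<Sum>j1\<le>a. \<Sum>j2\<le>b. X j1 j2)"
  define Lc where "Lc = (\<Sum>j1\<le>a. X j1 0)"
  define Mc where "Mc = (\<Sum>j2\<le>b. X 0 j2)"
  have "0 = (\<Sum>j2\<le>b. ee j2 *\<^sub>R (\<Sum>j1\<le>a. ee j1 *\<^sub>R X j1 j2))"
    using G[of a b] by (simp add: X_def)
  also have "\<dots> = (\<Sum>j2\<le>b. ee j2 *\<^sub>R (2 *\<^sub>R (\<Sum>j1\<le>a. X j1 j2) - X 0 j2))"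
    by (simp add: ee_sum)
  also have "\<dots> = 2 *\<^sub>R (\<Sum>j2\<le>b. 2 *\<^sub>R (\<Sum>j1\<le>a. X j1 j2) - X 0 j2) - (2 *\<^sub>R (\<Sum>j1\<le>a. X j1 0) - X 0 0)"
    by (rule ee_sum)
  also have "\<dots> = 4 *\<^sub>R Wc - 2 *\<^sub>R Mc - 2 *\<^sub>R Lc + X 0 0"
    unfolding Wc_def Mc_def Lc_def by (simp add: sum_subtractf scaleR_sum_right scaleR_diff_right sum.swap[of _ "{..a}"] algebra_simps)
  finally have e: "4 *\<^sub>R Wc = 2 *\<^sub>R Mc + 2 *\<^sub>R Lc - X 0 0" by (simp add: algebra_simps eq_neg_iff_add_eq_0)
  have "Wc = (1/4) *\<^sub>R (4 *\<^sub>R Wc)" by simp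
  also have "\<dots> = (1/2) *\<^sub>R Lc + (1/2) *\<^sub>R Mc - (1/4) *\<^sub>R X 0 0"
    unfolding e by (simp add: scaleR_diff_right scaleR_add_right)
  finally have "Wc = (1/2) *\<^sub>R Lc + (1/2) *\<^sub>R Mc - (1/4) *\<^sub>R X 0 0" .
  then show "(\<Sum>j1\<le>a. \<Sum>j2\<le>b. T (j1 + j2 + 1) (a - j1) (b - j2))
      = of_real (1/2) * (\<Sum>n\<le>a. T (Suc n) (a - n) b) + of_real (1/2) * (\<Sum>n\<le>b. T (Suc n) a (b - n)) - of_real (1/4) * T 1 a b"
    unfolding Wc_def Lc_def Mc_def X_def by (simp add: scaleR_conv_of_real)
qed

unbundle fps_syntax

context dsetup begin

definition T2 :: "(nat \<Rightarrow> 'r) \<Rightarrow> (nat \<Rightarrow> 'r) \<Rightarrow> nat \<Rightarrow> nat \<Rightarrow> nat \<Rightarrow> 'r" where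
  "T2 wt g n a b = (\<Sum>i\<le>n. P a (P b (g i)) * wt (n - i))"

lemma prodM: "shser_mu D g * ser_mu wt = SerM (T2 wt g)"
  unfolding shser_mu_def ser_mu_def bivar_mult SerM_def
proof (rule bivar_eqI)
  fix a b
  have "(\<Sum>i\<le>b. \<Sum>k\<le>a. (\<Sum>n\<le>i. P k (P (i - n) (g n))) * (if a - k = 0 then wt (b - i) else 0))
      = (\<Sum>i\<le>b. (\<Sum>n\<le>i. P a (P (i - n) (g n))) * wt (b - i))"
  proof (rule sum.cong[OF refl])
    fix i
    have "(\<Sum>k\<le>a. (\<Sum>n\<le>i. P k (P (i - n) (g n))) * (if a - k = 0 then wt (b - i) else 0))
        = (\<Sum>k\<in>{a}. (\<Sum>n\<le>i. P k (P (i - n) (g n))) * wt (b - i))"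
      by (rule sum.mono_neutral_cong_right) auto
    then show "(\<Sum>k\<le>a. (\<Sum>n\<le>i. P k (P (i - n) (g n))) * (if a - k = 0 then wt (b - i) else 0))
        = (\<Sum>n\<le>i. P a (P (i - n) (g n))) * wt (b - i)" by simp
  qed
  also have "\<dots> = (\<Sum>n\<le>b. T2 wt g n a (b - n))"
    unfolding T2_def using tri_sum[of "\<lambda>x y z. P a (P y (g x)) * wt z" b] by (simp add: sum_distrib_right)
  finally show "(\<Sum>i\<le>b. \<Sum>k\<le>a. (\<Sum>n\<le>i. P k (P (i - n) (g n))) * (if a - k = 0 then wt (b - i) else 0))
      = (\<Sum>n\<le>b. T2 wt g n a (b - n))" .
qed

lemma prodL: "shser_lam D g * ser_lam wt = SerL2 (T2 wt g)"
  unfolding shser_lam_def ser_lam_def bivar_mult SerL2_def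
proof (rule bivar_eqI)
  fix a b
  have "(\<Sum>i\<le>b. \<Sum>k\<le>a. (\<Sum>n\<le>k. P (k - n) (P i (g n))) * (if b - i = 0 then wt (a - k) else 0))
      = (\<Sum>i\<in>{b}. \<Sum>k\<le>a. (\<Sum>n\<le>k. P (k - n) (P i (g n))) * wt (a - k))"
    by (rule sum.mono_neutral_cong_right) auto
  also have "\<dots> = (\<Sum>k\<le>a. (\<Sum>n\<le>k. P (k - n) (P b (g n))) * wt (a - k))" by simp
  also have "\<dots> = (\<Sum>n\<le>a. T2 wt g n (a - n) b)"
    unfolding T2_def using tri_sum[of "\<lambda>x y z. P y (P b (g x)) * wt z" a] by (simp add: sum_distrib_right)
  finally show "(\<Sum>i\<le>b. \<Sum>k\<le>a. (\<Sum>n\<le>k. P (k - n) (P i (g n))) * (if b - i = 0 then wt (a - k) else 0))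
      = (\<Sum>n\<le>a. T2 wt g n (a - n) b)" .
qed

lemma OpA_T2: "OpA wt p (\<lambda>n. P b (g n)) m = (\<Sum>j\<le>p. ee j *\<^sub>R T2 wt g (Suc (m + j)) (p - j) b)"
  by (simp add: OpA_def RES_def T2_def)

lemma G2_w: assumes bil: "bilinear_identity D w wt"
  shows "(\<Sum>j2\<le>q. ee j2 *\<^sub>R (\<Sum>j1\<le>p. ee j1 *\<^sub>R T2 wt w (j1 + j2 + 1) (p - j1) (q - j2))) = 0"
  using B3[OF bil, of p q] by (simp add: OpA_T2 add.commute)

lemma G2_b: assumes bil: "bilinear_identity D w wt"
  shows "(\<Sum>j2\<le>q. ee j2 *\<^sub>R (\<Sum>j1\<le>p. ee j1 *\<^sub>R (\<lambda>n a b. T2 wt w (Suc n) a b + T2 wt (\<lambda>i. D 0 (w i)) n a b) (j1 + j2 + 1) (p - j1) (q - j2))) = 0"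
  using B4[OF bil, of p q] by (simp add: OpA_T2 add.commute scaleR_add_right sum.distrib)

lemma miwa2_bivar: "miwa2 D f = bivar (\<lambda>a b. P a (P b f))"
  by (simp add: miwa2_def)
lemma miwa2_add: "miwa2 D (x + y) = miwa2 D x + miwa2 D y"
  unfolding miwa2_bivar bivar_add[symmetric] by (simp add: P_add)
lemma miwa2_diff: "miwa2 D (x - y) = miwa2 D x - miwa2 D y"
  unfolding miwa2_bivar bivar_diff[symmetric] by (simp add: P_minus)
lemma miwa2_uminus: "miwa2 D (- x) = - miwa2 D x"
  unfolding miwa2_bivar bivar_uminus[symmetric] by (simp add: P_uminus)
lemma miwa2_scale: "miwa2 D (c *\<^sub>R x) = C2 (of_real c) * miwa2 D x"
  unfolding miwa2_bivar bivar_lconst by (rule bivar_eqI) (simp only: P_scale, simp add: scaleR_conv_of_real)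
lemma miwa2_mult: "miwa2 D (x * y) = miwa2 D x * miwa2 D y"
  unfolding miwa2_bivar bivar_mult
  by (rule bivar_eqI) (simp add: P_mult P_sum)
lemma miwa2_rconst: "bivar (\<lambda>a b. P a (P b x) * y) = miwa2 D x * C2 y"
  unfolding miwa2_bivar bivar_rconst ..

lemma PP_one: "P a (P b 1) = (if a = 0 \<and> b = 0 then 1 else 0)"
  by (simp add: P_one)

end

lemma abs_F2:
  fixes L M u h m2 mm c :: "'a::ring_1"
  assumes dummy: "True" and c_L: "central L" and c_M: "central M" and c_u: "central u" and c_h: "central h" and uLM: "u * (L + M) = 1"
  shows "1 - h * (L * M * u) * (m2 - c) = u * (M * (1 - h * L * (m2 - mm)) + L * (1 - h * M * (mm - c)))"
proof -
  have "u * (M * (1 - h * L * (m2 - mm)) + L * (1 - h * M * (mm - c))) - (1 - h * (L * M * u) * (m2 - c)) = u * (L + M) - 1"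
    by (simp add: algebra_simps central_comm[OF c_L, of m2, symmetric] central_lcomm[OF c_L, of m2, symmetric] central_comm[OF c_M, of m2, symmetric] central_lcomm[OF c_M, of m2, symmetric] central_comm[OF c_u, of m2, symmetric] central_lcomm[OF c_u, of m2, symmetric] central_comm[OF c_h, of m2, symmetric] central_lcomm[OF c_h, of m2, symmetric] central_comm[OF c_L, of mm, symmetric] central_lcomm[OF c_L, of mm, symmetric] central_comm[OF c_M, of mm, symmetric] central_lcomm[OF c_M, of mm, symmetric] central_comm[OF c_u, of mm, symmetric] central_lcomm[OF c_u, of mm, symmetric] central_comm[OF c_h, of mm, symmetric] central_lcomm[OF c_h, of mm, symmetric] central_comm[OF c_L, of c, symmetric] central_lcomm[OF c_L, of c, symmetric] central_comm[OF c_M, of c, symmetric] central_lcomm[OF c_M, of c, symmetric] central_comm[OF c_u, of c, symmetric] central_lcomm[OF c_u, of c, symmetric] central_comm[OF c_h, of c, symmetric] central_lcomm[OF c_h, of c, symmetric] central_comm[OF c_L, of M, symmetric] central_lcomm[OF c_L, of M, symmetric] central_comm[OF c_L, of u, symmetric] central_lcomm[OF c_L, of u, symmetric] central_comm[OF c_L, of h, symmetric] central_lcomm[OF c_L, of h, symmetric] central_comm[OF c_M, of u, symmetric] central_lcomm[OF c_M, of u, symmetric] central_comm[OF c_M, of h, symmetric] central_lcomm[OF c_M, of h, symmetric] central_comm[OF c_u, of h, symmetric] central_lcomm[OF c_u, of h, symmetric])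
  then show ?thesis unfolding uLM by simp
qed

lemma abs_iv:
  fixes s K k h c m2 :: "'a::ring_1"
  assumes dummy: "True" and c_s: "central s" and c_K: "central K" and c_k: "central k" and c_h: "central h" and sK: "s * K = k"
  shows "s + h * (k * (c - m2)) = s * (1 - h * K * (m2 - c))"
proof -
  have sK': "s * (K * z) = k * z" for z by (simp add: mult.assoc[symmetric] sK)
  show ?thesis by (simp add: algebra_simps sK sK' central_comm[OF c_s, of c, symmetric] central_lcomm[OF c_s, of c, symmetric] central_comm[OF c_K, of c, symmetric] central_lcomm[OF c_K, of c, symmetric] central_comm[OF c_k, of c, symmetric] central_lcomm[OF c_k, of c, symmetric] central_comm[OF c_h, of c, symmetric] central_lcomm[OF c_h, of c, symmetric] central_comm[OF c_s, of m2, symmetric] central_lcomm[OF c_s, of m2, symmetric] central_comm[OF c_K, of m2, symmetric] central_lcomm[OF c_K, of m2, symmetric] central_comm[OF c_k, of m2, symmetric] central_lcomm[OF c_k, of m2, symmetric] central_comm[OF c_h, of m2, symmetric] central_lcomm[OF c_h, of m2, symmetric] central_comm[OF c_s, of K, symmetric] central_lcomm[OF c_s, of K, symmetric] central_comm[OF c_s, of k, symmetric] central_lcomm[OF c_s, of k, symmetric] central_comm[OF c_s, of h, symmetric] central_lcomm[OF c_s, of h, symmetric] central_comm[OF c_K, of k, symmetric] central_lcomm[OF c_K, of k, symmetric] central_comm[OF c_K, of h, symmetric] central_lcomm[OF c_K, of h, symmetric] central_comm[OF c_k, of h, symmetric] central_lcomm[OF c_k, of h, symmetric])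
qed

lemma abs_v:
  fixes s s2 K k h c m2 a1 a2 a5 a6 :: "'a::ring_1"
  assumes dummy: "True" and c_s: "central s" and c_s2: "central s2" and c_K: "central K" and c_k: "central k" and c_h: "central h" and s2K: "s2 * K = s" and sK: "s * K = k" and hh: "h + h = 1"
  shows "s2 + s * (c - m2) + h * (k * (a1 + h * a2 + h * (c * c) - m2 * c + (- a5 + h * a6 + h * (m2 * m2)) - a6))
     = s2 * ((1 - h * K * (m2 - c)) * (1 - h * K * (m2 - c))) - h * k * ((a5 + h * a6) - (a1 + h * a2)) + h * h * k * (c * m2 - m2 * c)"
proof -
  have sK': "s * (K * z) = k * z" for z by (simp add: mult.assoc[symmetric] sK)
  have s2K': "s2 * (K * z) = s * z" for z by (simp add: mult.assoc[symmetric] s2K)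
  have "s2 + s * (c - m2) + h * (k * (a1 + h * a2 + h * (c * c) - m2 * c + (- a5 + h * a6 + h * (m2 * m2)) - a6))
     - (s2 * ((1 - h * K * (m2 - c)) * (1 - h * K * (m2 - c))) - h * k * ((a5 + h * a6) - (a1 + h * a2)) + h * h * k * (c * m2 - m2 * c))
     = (h + h - 1) * (s * (m2 - c) + h * (k * (m2 * c + a6)))"
    by (simp add: algebra_simps sK sK' s2K s2K' central_comm[OF c_s, of c, symmetric] central_lcomm[OF c_s, of c, symmetric] central_comm[OF c_s2, of c, symmetric] central_lcomm[OF c_s2, of c, symmetric] central_comm[OF c_K, of c, symmetric] central_lcomm[OF c_K, of c, symmetric] central_comm[OF c_k, of c, symmetric] central_lcomm[OF c_k, of c, symmetric] central_comm[OF c_h, of c, symmetric] central_lcomm[OF c_h, of c, symmetric] central_comm[OF c_s, of m2, symmetric] central_lcomm[OF c_s, of m2, symmetric] central_comm[OF c_s2, of m2, symmetric] central_lcomm[OF c_s2, of m2, symmetric] central_comm[OF c_K, of m2, symmetric] central_lcomm[OF c_K, of m2, symmetric] central_comm[OF c_k, of m2, symmetric] central_lcomm[OF c_k, of m2, symmetric] central_comm[OF c_h, of m2, symmetric] central_lcomm[OF c_h, of m2, symmetric] central_comm[OF c_s, of a1, symmetric] central_lcomm[OF c_s, of a1, symmetric] central_comm[OF c_s2, of a1, symmetric] central_lcomm[OF c_s2, of a1, symmetric] central_comm[OF c_K, of a1, symmetric] central_lcomm[OF c_K, of a1, symmetric] central_comm[OF c_k, of a1, symmetric] central_lcomm[OF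 c_k, of a1, symmetric] central_comm[OF c_h, of a1, symmetric] central_lcomm[OF c_h, of a1, symmetric] central_comm[OF c_s, of a2, symmetric] central_lcomm[OF c_s, of a2, symmetric] central_comm[OF c_s2, of a2, symmetric] central_lcomm[OF c_s2, of a2, symmetric] central_comm[OF c_K, of a2, symmetric] central_lcomm[OF c_K, of a2, symmetric] central_comm[OF c_k, of a2, symmetric] central_lcomm[OF c_k, of a2, symmetric] central_comm[OF c_h, of a2, symmetric] central_lcomm[OF c_h, of a2, symmetric] central_comm[OF c_s, of a5, symmetric] central_lcomm[OF c_s, of a5, symmetric] central_comm[OF c_s2, of a5, symmetric] central_lcomm[OF c_s2, of a5, symmetric] central_comm[OF c_K, of a5, symmetric] central_lcomm[OF c_K, of a5, symmetric] central_comm[OF c_k, of a5, symmetric] central_lcomm[OF c_k, of a5, symmetric] central_comm[OF c_h, of a5, symmetric] central_lcomm[OF c_h, of a5, symmetric] central_comm[OF c_s, of a6, symmetric] central_lcomm[OF c_s, of a6, symmetric] central_comm[OF c_s2, of a6, symmetric] central_lcomm[OF c_s2, of a6, symmetric] central_comm[OF c_K, of a6, symmetric] central_lcomm[OF c_K, of a6, symmetric] central_comm[OF c_k, of a6, symmetric] central_lcomm[OF c_k, of a6, symmetric] central_comm[OF c_h, of a6, symmetric] central_lcomm[OF c_h, of a6, symmetric] central_comm[OF c_s, of s2, symmetric] central_lcomm[OF c_s, of s2, symmetric] central_comm[OF c_s, of K, symmetric] central_lcomm[OF c_s, of K, symmetric] central_comm[OF c_s, of k, symmetric] central_lcomm[OF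 c_s, of k, symmetric] central_comm[OF c_s, of h, symmetric] central_lcomm[OF c_s, of h, symmetric] central_comm[OF c_s2, of K, symmetric] central_lcomm[OF c_s2, of K, symmetric] central_comm[OF c_s2, of k, symmetric] central_lcomm[OF c_s2, of k, symmetric] central_comm[OF c_s2, of h, symmetric] central_lcomm[OF c_s2, of h, symmetric] central_comm[OF c_K, of k, symmetric] central_lcomm[OF c_K, of k, symmetric] central_comm[OF c_K, of h, symmetric] central_lcomm[OF c_K, of h, symmetric] central_comm[OF c_k, of h, symmetric] central_lcomm[OF c_k, of h, symmetric])
  then show ?thesis unfolding hh by simp
qed

lemma abs_GL:
  fixes L M u h L1 M1 A1 :: "'a::ring_1"
  assumes dummy: "True" and c_L: "central L" and c_M: "central M" and c_u: "central u" and c_h: "central h" and uLM: "u * (L + M) = 1" and hh: "h + h = 1"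
    and rel: "(L - M) * (h * L1 + h * M1 - h * h * A1) = L * L1 - M * M1"
  shows "L1 = M1 - h * ((L - M) * u * A1)"
proof -
  have e1: "h * ((L + M) * (L1 - M1)) + h * h * ((L - M) * A1)
     = (h + h - 1) * (L * L1 - M * M1) - ((L - M) * (h * L1 + h * M1 - h * h * A1) - (L * L1 - M * M1))"
    by (simp add: algebra_simps central_comm[OF c_L, of L1, symmetric] central_lcomm[OF c_L, of L1, symmetric] central_comm[OF c_M, of L1, symmetric] central_lcomm[OF c_M, of L1, symmetric] central_comm[OF c_u, of L1, symmetric] central_lcomm[OF c_u, of L1, symmetric] central_comm[OF c_h, of L1, symmetric] central_lcomm[OF c_h, of L1, symmetric] central_comm[OF c_L, of M1, symmetric] central_lcomm[OF c_L, of M1, symmetric] central_comm[OF c_M, of M1, symmetric] central_lcomm[OF c_M, of M1, symmetric] central_comm[OF c_u, of M1, symmetric] central_lcomm[OF c_u, of M1, symmetric] central_comm[OF c_h, of M1, symmetric] central_lcomm[OF c_h, of M1, symmetric] central_comm[OF c_L, of A1, symmetric] central_lcomm[OF c_L, of A1, symmetric] central_comm[OF c_M, of A1, symmetric] central_lcomm[OF c_M, of A1, symmetric] central_comm[OF c_u, of A1, symmetric] central_lcomm[OF c_u, of A1, symmetric] central_comm[OF c_h, of A1, symmetric] central_lcomm[OF c_h, of A1, symmetric] central_comm[OF c_L, of M, symmetric] central_lcomm[OF c_L, of M, symmetric] central_comm[OF c_L, of u, symmetric] central_lcomm[OF c_L, of u, symmetric] central_comm[OF c_L, of h, symmetric]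 central_lcomm[OF c_L, of h, symmetric] central_comm[OF c_M, of u, symmetric] central_lcomm[OF c_M, of u, symmetric] central_comm[OF c_M, of h, symmetric] central_lcomm[OF c_M, of h, symmetric] central_comm[OF c_u, of h, symmetric] central_lcomm[OF c_u, of h, symmetric])
  have e2: "h * ((L + M) * (L1 - M1)) = - (h * h * ((L - M) * A1))"
    using e1 unfolding rel hh by (simp add: eq_neg_iff_add_eq_0)
  have u': "u * ((L + M) * z) = z" for z by (simp add: mult.assoc[symmetric] uLM)
  have "L1 - M1 = (h + h) * (u * ((L + M) * (L1 - M1)))" by (simp add: hh u')
  also have "\<dots> = u * (h * ((L + M) * (L1 - M1))) + u * (h * ((L + M) * (L1 - M1)))"
    by (simp add: distrib_right central_lcomm[OF c_h])
  also have "\<dots> = - ((h + h) * (h * ((L - M) * u * A1)))"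
    unfolding e2 by (simp add: algebra_simps central_comm[OF c_L, of L1, symmetric] central_lcomm[OF c_L, of L1, symmetric] central_comm[OF c_M, of L1, symmetric] central_lcomm[OF c_M, of L1, symmetric] central_comm[OF c_u, of L1, symmetric] central_lcomm[OF c_u, of L1, symmetric] central_comm[OF c_h, of L1, symmetric] central_lcomm[OF c_h, of L1, symmetric] central_comm[OF c_L, of M1, symmetric] central_lcomm[OF c_L, of M1, symmetric] central_comm[OF c_M, of M1, symmetric] central_lcomm[OF c_M, of M1, symmetric] central_comm[OF c_u, of M1, symmetric] central_lcomm[OF c_u, of M1, symmetric] central_comm[OF c_h, of M1, symmetric] central_lcomm[OF c_h, of M1, symmetric] central_comm[OF c_L, of A1, symmetric] central_lcomm[OF c_L, of A1, symmetric] central_comm[OF c_M, of A1, symmetric] central_lcomm[OF c_M, of A1, symmetric] central_comm[OF c_u, of A1, symmetric] central_lcomm[OF c_u, of A1, symmetric] central_comm[OF c_h, of A1, symmetric] central_lcomm[OF c_h, of A1, symmetric] central_comm[OF c_L, of M, symmetric] central_lcomm[OF c_L, of M, symmetric] central_comm[OF c_L, of u, symmetric] central_lcomm[OF c_L, of u, symmetric] central_comm[OF c_L, of h, symmetric] central_lcomm[OF c_L, of h, symmetric] central_comm[OF c_M, of u, symmetric] central_lcomm[OF c_M, of u, symmetric] central_comm[OF c_M, of h, symmetric] central_lcomm[OF c_M, of h, symmetric] central_comm[OF c_u, of h, symmetric] central_lcomm[OF c_u, of h, symmetric])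
  also have "\<dots> = - (h * ((L - M) * u * A1))" unfolding hh by simp
  finally show ?thesis by (simp add: algebra_simps)
qed

context dsetup begin

abbreviation hf :: "'r fls fls" where "hf \<equiv> C2 (of_real (1/2))"

lemma scal_facts:
  shows sK: "(Mu_inv - Lam_inv) * (Lam * Mu * u0) = (Lam - Mu) * (u0 :: 'r fls fls)"
    and s2K: "(Mu_inv * Mu_inv - Lam_inv * Lam_inv) * (Lam * Mu * u0) = (Mu_inv - Lam_inv :: 'r fls fls)"
proof -
  have cLam: "central (Lam :: 'r fls fls)" and cMu: "central (Mu :: 'r fls fls)"
    and cLam_inv: "central (Lam_inv :: 'r fls fls)" and cMu_inv: "central (Mu_inv :: 'r fls fls)"
    and cu0: "central (u0 :: 'r fls fls)" by simp_all
  have LL: "Lam * Lam_inv = (1::'r fls fls)" "Lam * (Lam_inv * z) = (z::'r fls fls)" for z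
    by (simp_all add: Lam_Lam_inv mult.assoc[symmetric])
  have MM: "Mu * Mu_inv = (1::'r fls fls)" "Mu * (Mu_inv * z) = (z::'r fls fls)" for z
    by (simp_all add: Mu_Mu_inv mult.assoc[symmetric])
  show "(Mu_inv - Lam_inv) * (Lam * Mu * u0) = (Lam - Mu) * (u0 :: 'r fls fls)"
    by (simp add: algebra_simps LL MM central_comm[OF cLam, of Lam_inv, symmetric] central_lcomm[OF cLam, of Lam_inv, symmetric] central_comm[OF cLam, of Mu, symmetric] central_lcomm[OF cLam, of Mu, symmetric] central_comm[OF cLam, of Mu_inv, symmetric] central_lcomm[OF cLam, of Mu_inv, symmetric] central_comm[OF cLam, of u0, symmetric] central_lcomm[OF cLam, of u0, symmetric] central_comm[OF cLam_inv, of Mu, symmetric] central_lcomm[OF cLam_inv, of Mu, symmetric] central_comm[OF cLam_inv, of Mu_inv, symmetric] central_lcomm[OF cLam_inv, of Mu_inv, symmetric] central_comm[OF cLam_inv, of u0, symmetric] central_lcomm[OF cLam_inv, of u0, symmetric] central_comm[OF cMu, of Mu_inv, symmetric] central_lcomm[OF cMu, of Mu_inv, symmetric] central_comm[OF cMu, of u0, symmetric] central_lcomm[OF cMu, of u0, symmetric] central_comm[OF cMu_inv, of u0, symmetric] central_lcomm[OF cMu_inv, of u0, symmetric])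
  have e1: "(Mu_inv * Mu_inv - Lam_inv * Lam_inv) * (Lam * Mu * u0) = (Mu_inv * Lam_inv * (Lam - Mu)) * ((Lam + Mu) * (u0 :: 'r fls fls))"
    by (simp add: algebra_simps LL MM central_comm[OF cLam, of Lam_inv, symmetric] central_lcomm[OF cLam, of Lam_inv, symmetric] central_comm[OF cLam, of Mu, symmetric] central_lcomm[OF cLam, of Mu, symmetric] central_comm[OF cLam, of Mu_inv, symmetric] central_lcomm[OF cLam, of Mu_inv, symmetric] central_comm[OF cLam, of u0, symmetric] central_lcomm[OF cLam, of u0, symmetric] central_comm[OF cLam_inv, of Mu, symmetric] central_lcomm[OF cLam_inv, of Mu, symmetric] central_comm[OF cLam_inv, of Mu_inv, symmetric] central_lcomm[OF cLam_inv, of Mu_inv, symmetric] central_comm[OF cLam_inv, of u0, symmetric] central_lcomm[OF cLam_inv, of u0, symmetric] central_comm[OF cMu, of Mu_inv, symmetric] central_lcomm[OF cMu, of Mu_inv, symmetric] central_comm[OF cMu, of u0, symmetric] central_lcomm[OF cMu, of u0, symmetric] central_comm[OF cMu_inv, of u0, symmetric] central_lcomm[OF cMu_inv, of u0, symmetric])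
  also have "\<dots> = Mu_inv * Lam_inv * (Lam - Mu)" unfolding LM_u0 by simp
  also have "\<dots> = Mu_inv - Lam_inv" by (simp add: algebra_simps LL MM central_comm[OF cLam, of Lam_inv, symmetric] central_lcomm[OF cLam, of Lam_inv, symmetric] central_comm[OF cLam, of Mu, symmetric] central_lcomm[OF cLam, of Mu, symmetric] central_comm[OF cLam, of Mu_inv, symmetric] central_lcomm[OF cLam, of Mu_inv, symmetric] central_comm[OF cLam, of u0, symmetric] central_lcomm[OF cLam, of u0, symmetric] central_comm[OF cLam_inv, of Mu, symmetric] central_lcomm[OF cLam_inv, of Mu, symmetric] central_comm[OF cLam_inv, of Mu_inv, symmetric] central_lcomm[OF cLam_inv, of Mu_inv, symmetric] central_comm[OF cLam_inv, of u0, symmetric] central_lcomm[OF cLam_inv, of u0, symmetric] central_comm[OF cMu, of Mu_inv, symmetric] central_lcomm[OF cMu, of Mu_inv, symmetric] central_comm[OF cMu, of u0, symmetric] central_lcomm[OF cMu, of u0, symmetric] central_comm[OF cMu_inv, of u0, symmetric] central_lcomm[OF cMu_inv, of u0, symmetric])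
  finally show "(Mu_inv * Mu_inv - Lam_inv * Lam_inv) * (Lam * Mu * u0) = (Mu_inv - Lam_inv :: 'r fls fls)" .
qed

lemma GL_conc:
  fixes T :: "nat \<Rightarrow> nat \<Rightarrow> nat \<Rightarrow> 'r"
  assumes G: "\<And>p q. (\<Sum>j2\<le>q. ee j2 *\<^sub>R (\<Sum>j1\<le>p. ee j1 *\<^sub>R T (j1 + j2 + 1) (p - j1) (q - j2))) = 0"
  shows "SerL2 (\<lambda>n. T (Suc n)) = SerM (\<lambda>n. T (Suc n)) - hf * ((Lam - Mu) * u0 * A2 T 1)"
proof (rule abs_GL)
  show "u0 * (Lam + Mu) = (1 :: 'r fls fls)" by (rule u0_LM)
  show "hf + hf = 1" by (rule hh2)
  have "(Lam - Mu) * W2 T = Lam * SerL2 (\<lambda>n. T (Suc n)) - Mu * SerM (\<lambda>n. T (Suc n))" by (rule Wrel)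
  then show "(Lam - Mu) * (hf * SerL2 (\<lambda>n. T (Suc n)) + hf * SerM (\<lambda>n. T (Suc n)) - hf * hf * A2 T 1)
      = Lam * SerL2 (\<lambda>n. T (Suc n)) - Mu * SerM (\<lambda>n. T (Suc n))"
    unfolding Grel[OF G] hhq2 .
qed simp_all

lemma A2_T2_0: assumes "w 0 = 1" "wt 0 = 1" shows "A2 (T2 wt w) 0 = 1"
proof -
  have "A2 (T2 wt w) 0 = bivar (\<lambda>a b. if a = 0 \<and> b = 0 then 1 else 0)"
    unfolding A2_def by (rule bivar_eqI) (simp add: T2_def assms PP_one atMost_0)
  then show ?thesis by (simp add: bivar_const C2_one)
qed

lemma A2_T2_1: assumes "w 0 = 1" "wt 0 = 1" shows "A2 (T2 wt w) 1 = C2 (wt 1) + miwa2 D (w 1)"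
proof -
  have "A2 (T2 wt w) 1 = bivar (\<lambda>a b. (if a = 0 \<and> b = 0 then wt 1 else 0) + P a (P b (w 1)))"
    unfolding A2_def by (rule bivar_eqI) (simp add: T2_def assms PP_one)
  then show ?thesis unfolding bivar_add bivar_const miwa2_bivar .
qed

lemma A2_T2_2: assumes "w 0 = 1" "wt 0 = 1"
  shows "A2 (T2 wt w) 2 = C2 (wt 2) + miwa2 D (w 1) * C2 (wt 1) + miwa2 D (w 2)"
proof -
  have "A2 (T2 wt w) 2 = bivar (\<lambda>a b. (if a = 0 \<and> b = 0 then wt 2 else 0) + P a (P b (w 1)) * wt 1 + P a (P b (w 2)))"
    unfolding A2_def by (rule bivar_eqI) (simp add: T2_def assms PP_one numeral_2_eq_2 add.assoc)
  then show ?thesis unfolding bivar_add bivar_const miwa2_bivar miwa2_rconst .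
qed

lemma A2_T2D_0: assumes "w 0 = 1" "wt 0 = 1" shows "A2 (T2 wt (\<lambda>i. D 0 (w i))) 0 = 0"
  unfolding A2_def T2_def using assms by (simp add: atMost_0 bivar_zero)

lemma A2_T2D_1: assumes "w 0 = 1" "wt 0 = 1" shows "A2 (T2 wt (\<lambda>i. D 0 (w i))) 1 = miwa2 D (D 0 (w 1))"
proof -
  have "A2 (T2 wt (\<lambda>i. D 0 (w i))) 1 = bivar (\<lambda>a b. P a (P b (D 0 (w 1))))"
    unfolding A2_def by (rule bivar_eqI) (simp add: T2_def assms)
  then show ?thesis unfolding miwa2_bivar .
qed

lemma A2_add: "A2 (\<lambda>n a b. T n a b + U n a b) n = A2 T n + A2 U n"
  unfolding A2_def by (rule bivar_add)

end

context dsetup begin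

lemma conj_F2:
  assumes F2_def: "F2 = 1 - C2 (of_real (1/2)) * (Lam * Mu * uinv (Lam + Mu)) * (miwa2 D \<phi> - C2 \<phi>)"
  shows "F2 = uinv (Lam + Mu) *
              (Mu * (1 - C2 (of_real (1/2)) * Lam * (miwa2 D \<phi> - miwa_mu D \<phi>))
               + Lam * (1 - C2 (of_real (1/2)) * Mu * (miwa_mu D \<phi> - C2 \<phi>)))"
  unfolding F2_def uinv_LM by (rule abs_F2) (simp_all add: u0_LM)

lemma conj_iv:
  assumes bil: "bilinear_identity D w wt" and w0: "w 0 = 1" and wt0: "wt 0 = 1"
    and phi_def: "\<phi> = - w 1"
    and F2_def: "F2 = 1 - C2 (of_real (1/2)) * (Lam * Mu * uinv (Lam + Mu)) * (miwa2 D \<phi> - C2 \<phi>)"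
  shows "Mu_inv * shser_mu D w * ser_mu wt - Lam_inv * shser_lam D w * ser_lam wt = (Mu_inv - Lam_inv) * F2"
proof -
  define M1 where "M1 = SerM (\<lambda>n. T2 wt w (Suc n))"
  define L1 where "L1 = SerL2 (\<lambda>n. T2 wt w (Suc n))"
  have wt1': "wt 1 = \<phi>" using wt1[OF bil w0 wt0] phi_def by simp
  have A1: "A2 (T2 wt w) 1 = C2 \<phi> - miwa2 D \<phi>"
    unfolding A2_T2_1[where w=w and wt=wt, OF w0 wt0] wt1' phi_def miwa2_uminus by simp
  have GL: "L1 = M1 - hf * ((Lam - Mu) * u0 * (C2 \<phi> - miwa2 D \<phi>))"
    unfolding L1_def M1_def A1[symmetric] by (rule GL_conc) (rule G2_w[OF bil])
  have SM: "SerM (T2 wt w) = 1 + Mu * M1"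
    unfolding M1_def using splitM[of "T2 wt w"] A2_T2_0[where w=w and wt=wt, OF w0 wt0] by simp
  have SL: "SerL2 (T2 wt w) = 1 + Lam * L1"
    unfolding L1_def using splitL[of "T2 wt w"] A2_T2_0[where w=w and wt=wt, OF w0 wt0] by simp
  have MiM: "Mu_inv * (Mu * z) = (z :: 'r fls fls)" for z
    by (simp add: mult.assoc[symmetric] central_comm[OF central_Mu_inv, of Mu] Mu_Mu_inv)
  have LiL: "Lam_inv * (Lam * z) = (z :: 'r fls fls)" for z
    by (simp add: mult.assoc[symmetric] central_comm[OF central_Lam_inv, of Lam] Lam_Lam_inv)
  have "Mu_inv * shser_mu D w * ser_mu wt - Lam_inv * shser_lam D w * ser_lam wt
      = Mu_inv * SerM (T2 wt w) - Lam_inv * SerL2 (T2 wt w)"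
    by (simp add: mult.assoc prodM prodL)
  also have "\<dots> = (Mu_inv - Lam_inv) + hf * (((Lam - Mu) * u0) * (C2 \<phi> - miwa2 D \<phi>))"
    unfolding SM SL GL by (simp add: distrib_left MiM LiL algebra_simps)
  also have "\<dots> = (Mu_inv - Lam_inv) * F2"
    unfolding F2_def uinv_LM
    by (rule abs_iv) (simp_all add: sK)
  finally show ?thesis .
qed

lemma conj_i:
  assumes bil: "bilinear_identity D w wt" and w0: "w 0 = 1" and wt0: "wt 0 = 1"
    and phi_def: "\<phi> = - w 1"
    and thetat_def: "w 2 = - \<theta>t + (1/2) *\<^sub>R (D 0 \<phi> + \<phi> * \<phi>)"
  shows "wt 2 = \<theta>t + (1/2) *\<^sub>R (D 0 \<phi> + \<phi> * \<phi>)"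
proof -
  have wt1': "wt 1 = \<phi>" using wt1[OF bil w0 wt0] phi_def by simp
  have w1: "w 1 = - \<phi>" using phi_def by simp
  have e0: "wt 2 + w 1 * wt 1 + w 2 + D 0 (w 1) = 0" by (rule wt2[OF bil w0 wt0])
  have "wt 2 = (wt 2 + w 1 * wt 1 + w 2 + D 0 (w 1)) - w 1 * wt 1 - w 2 - D 0 (w 1)"
    by (simp add: algebra_simps)
  also have "\<dots> = - (w 1 * wt 1) - w 2 - D 0 (w 1)" unfolding e0 by simp
  also have "\<dots> = \<theta>t + ((D 0 \<phi> + \<phi> * \<phi>) - (1/2) *\<^sub>R (D 0 \<phi> + \<phi> * \<phi>))"
    unfolding thetat_def w1 wt1' by (simp add: D_uminus algebra_simps)
  also have "(D 0 \<phi> + \<phi> * \<phi>) - (1/2) *\<^sub>R (D 0 \<phi> + \<phi> * \<phi>) = (1/2) *\<^sub>R (D 0 \<phi> + \<phi> * \<phi>)"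
    using half_half[of "D 0 \<phi> + \<phi> * \<phi>"] by (simp add: algebra_simps)
  finally show ?thesis .
qed

lemma conj_v:
  assumes bil: "bilinear_identity D w wt" and w0: "w 0 = 1" and wt0: "wt 0 = 1"
    and phi_def: "\<phi> = - w 1"
    and thetat_def: "w 2 = - \<theta>t + (1/2) *\<^sub>R (D 0 \<phi> + \<phi> * \<phi>)"
    and thetac_def: "\<theta>c = \<theta>t + (1/2) *\<^sub>R D 0 \<phi>"
    and F2_def: "F2 = 1 - C2 (of_real (1/2)) * (Lam * Mu * uinv (Lam + Mu)) * (miwa2 D \<phi> - C2 \<phi>)"
  shows "Mu_inv * (shser_mu D (\<lambda>n. D 0 (w n)) + Mu_inv * shser_mu D w) * ser_mu wt
           - Lam_inv * (shser_lam D (\<lambda>n. D 0 (w n)) + Lam_inv * shser_lam D w) * ser_lam wt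
         = (Mu_inv\<^sup>2 - Lam_inv\<^sup>2) * F2\<^sup>2
           - C2 (of_real (1/2)) * ((Lam - Mu) * uinv (Lam + Mu)) * (miwa2 D \<theta>c - C2 \<theta>c)
           + C2 (of_real (1/4)) * ((Lam - Mu) * uinv (Lam + Mu)) * commut (C2 \<phi>) (miwa2 D \<phi>)"
proof -
  define Tb where "Tb n a b = T2 wt w (Suc n) a b + T2 wt (\<lambda>i. D 0 (w i)) n a b" for n a b
  define M1b where "M1b = SerM (\<lambda>n. Tb (Suc n))"
  define L1b where "L1b = SerL2 (\<lambda>n. Tb (Suc n))"
  define c where "c = C2 \<phi>"
  define m2 where "m2 = miwa2 D \<phi>"
  define a1 where "a1 = C2 \<theta>t"
  define a2 where "a2 = C2 (D 0 \<phi>)"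
  define a5 where "a5 = miwa2 D \<theta>t"
  define a6 where "a6 = miwa2 D (D 0 \<phi>)"
  have wt1': "wt 1 = \<phi>" using wt1[OF bil w0 wt0] phi_def by simp
  have w1: "w 1 = - \<phi>" using phi_def by simp
  have wt2': "wt 2 = \<theta>t + (1/2) *\<^sub>R (D 0 \<phi> + \<phi> * \<phi>)"
    by (rule conj_i[OF bil w0 wt0 phi_def thetat_def])
  have G: "\<And>p q. (\<Sum>j2\<le>q. ee j2 *\<^sub>R (\<Sum>j1\<le>p. ee j1 *\<^sub>R Tb (j1 + j2 + 1) (p - j1) (q - j2))) = 0"
    unfolding Tb_def by (rule G2_b[OF bil])
  have GL: "L1b = M1b - hf * ((Lam - Mu) * u0 * A2 Tb 1)"
    unfolding L1b_def M1b_def by (rule GL_conc[OF G])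
  have A0b: "A2 Tb 0 = c - m2"
  proof -
    have "A2 Tb 0 = bivar (\<lambda>a b. T2 wt w 1 a b + T2 wt (\<lambda>i. D 0 (w i)) 0 a b)"
      unfolding A2_def Tb_def by simp
    also have "\<dots> = A2 (T2 wt w) 1 + A2 (T2 wt (\<lambda>i. D 0 (w i))) 0"
      unfolding A2_def by (rule bivar_add)
    finally have "A2 Tb 0 = A2 (T2 wt w) 1 + A2 (T2 wt (\<lambda>i. D 0 (w i))) 0" .
    then show ?thesis unfolding A2_T2_1[where w=w and wt=wt, OF w0 wt0] A2_T2D_0[where w=w and wt=wt, OF w0 wt0]
      wt1' w1 miwa2_uminus c_def m2_def by simp
  qed
  have A1b: "A2 Tb 1 = a1 + hf * a2 + hf * (c * c) - m2 * c + (- a5 + hf * a6 + hf * (m2 * m2)) - a6"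
  proof -
    have "A2 Tb 1 = bivar (\<lambda>a b. T2 wt w 2 a b + T2 wt (\<lambda>i. D 0 (w i)) 1 a b)"
      unfolding A2_def Tb_def by (simp add: numeral_2_eq_2)
    also have "\<dots> = A2 (T2 wt w) 2 + A2 (T2 wt (\<lambda>i. D 0 (w i))) 1"
      unfolding A2_def by (rule bivar_add)
    also have "\<dots> = C2 (wt 2) + miwa2 D (w 1) * C2 (wt 1) + miwa2 D (w 2) + miwa2 D (D 0 (w 1))"
      unfolding A2_T2_2[where w=w and wt=wt, OF w0 wt0] A2_T2D_1[where w=w and wt=wt, OF w0 wt0] ..
    also have "C2 (wt 2) = a1 + hf * a2 + hf * (c * c)"
      unfolding wt2' C2_add C2_scaleR C2_mult a1_def a2_def c_def by (simp add: distrib_left)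
    also have "miwa2 D (w 2) = - a5 + hf * a6 + hf * (m2 * m2)"
      unfolding thetat_def miwa2_add miwa2_uminus miwa2_scale miwa2_mult a5_def a6_def m2_def by (simp add: distrib_left)
    also have "miwa2 D (w 1) * C2 (wt 1) = - (m2 * c)"
      unfolding w1 wt1' miwa2_uminus m2_def c_def by simp
    also have "miwa2 D (D 0 (w 1)) = - a6"
      unfolding w1 D_uminus miwa2_uminus a6_def ..
    finally show ?thesis by (simp add: algebra_simps)
  qed
  have SMw: "SerM (T2 wt w) = 1 + Mu * SerM (\<lambda>n. T2 wt w (Suc n))"
    using splitM[of "T2 wt w"] A2_T2_0[where w=w and wt=wt, OF w0 wt0] by simp
  have SLw: "SerL2 (T2 wt w) = 1 + Lam * SerL2 (\<lambda>n. T2 wt w (Suc n))"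
    using splitL[of "T2 wt w"] A2_T2_0[where w=w and wt=wt, OF w0 wt0] by simp
  have SMb: "SerM Tb = SerM (\<lambda>n. T2 wt w (Suc n)) + SerM (T2 wt (\<lambda>i. D 0 (w i)))"
    unfolding Tb_def SerM_add ..
  have SLb: "SerL2 Tb = SerL2 (\<lambda>n. T2 wt w (Suc n)) + SerL2 (T2 wt (\<lambda>i. D 0 (w i)))"
    unfolding Tb_def SerL2_add ..
  have MiM: "Mu_inv * (Mu * z) = (z :: 'r fls fls)" for z
    by (simp add: mult.assoc[symmetric] central_comm[OF central_Mu_inv, of Mu] Mu_Mu_inv)
  have LiL: "Lam_inv * (Lam * z) = (z :: 'r fls fls)" for z
    by (simp add: mult.assoc[symmetric] central_comm[OF central_Lam_inv, of Lam] Lam_Lam_inv)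
  have "Mu_inv * (shser_mu D (\<lambda>n. D 0 (w n)) + Mu_inv * shser_mu D w) * ser_mu wt
      = Mu_inv * (SerM (T2 wt (\<lambda>i. D 0 (w i))) + Mu_inv * SerM (T2 wt w))"
    by (simp add: mult.assoc distrib_right prodM)
  also have "\<dots> = Mu_inv * (Mu_inv + SerM Tb)"
    unfolding SMw SMb by (simp add: distrib_left MiM algebra_simps)
  also have "\<dots> = Mu_inv * Mu_inv + Mu_inv * A2 Tb 0 + M1b"
    unfolding splitM[of Tb] M1b_def by (simp add: distrib_left MiM add.assoc)
  finally have LM: "Mu_inv * (shser_mu D (\<lambda>n. D 0 (w n)) + Mu_inv * shser_mu D w) * ser_mu wt
      = Mu_inv * Mu_inv + Mu_inv * A2 Tb 0 + M1b" .
  have "Lam_inv * (shser_lam D (\<lambda>n. D 0 (w n)) + Lam_inv * shser_lam D w) * ser_lam wt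
      = Lam_inv * (SerL2 (T2 wt (\<lambda>i. D 0 (w i))) + Lam_inv * SerL2 (T2 wt w))"
    by (simp add: mult.assoc distrib_right prodL)
  also have "\<dots> = Lam_inv * (Lam_inv + SerL2 Tb)"
    unfolding SLw SLb by (simp add: distrib_left LiL algebra_simps)
  also have "\<dots> = Lam_inv * Lam_inv + Lam_inv * A2 Tb 0 + L1b"
    unfolding splitL[of Tb] L1b_def by (simp add: distrib_left LiL add.assoc)
  finally have LL: "Lam_inv * (shser_lam D (\<lambda>n. D 0 (w n)) + Lam_inv * shser_lam D w) * ser_lam wt
      = Lam_inv * Lam_inv + Lam_inv * A2 Tb 0 + L1b" .
  have LHS: "Mu_inv * (shser_mu D (\<lambda>n. D 0 (w n)) + Mu_inv * shser_mu D w) * ser_mu wt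
           - Lam_inv * (shser_lam D (\<lambda>n. D 0 (w n)) + Lam_inv * shser_lam D w) * ser_lam wt
      = (Mu_inv * Mu_inv - Lam_inv * Lam_inv) + (Mu_inv - Lam_inv) * (c - m2)
        + hf * ((Lam - Mu) * u0 * (a1 + hf * a2 + hf * (c * c) - m2 * c + (- a5 + hf * a6 + hf * (m2 * m2)) - a6))"
    unfolding LM LL GL A0b[symmetric] A1b[symmetric] by (simp add: algebra_simps)
  have RHS: "(Mu_inv\<^sup>2 - Lam_inv\<^sup>2) * F2\<^sup>2
           - C2 (of_real (1/2)) * ((Lam - Mu) * uinv (Lam + Mu)) * (miwa2 D \<theta>c - C2 \<theta>c)
           + C2 (of_real (1/4)) * ((Lam - Mu) * uinv (Lam + Mu)) * commut (C2 \<phi>) (miwa2 D \<phi>)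
      = (Mu_inv * Mu_inv - Lam_inv * Lam_inv) * ((1 - hf * (Lam * Mu * u0) * (m2 - c)) * (1 - hf * (Lam * Mu * u0) * (m2 - c)))
        - hf * ((Lam - Mu) * u0) * ((a5 + hf * a6) - (a1 + hf * a2)) + hf * hf * ((Lam - Mu) * u0) * (c * m2 - m2 * c)"
  proof -
    have t1: "miwa2 D \<theta>c = a5 + hf * a6"
      unfolding thetac_def miwa2_add miwa2_scale a5_def a6_def ..
    have t2: "C2 \<theta>c = a1 + hf * a2"
      unfolding thetac_def C2_add C2_scaleR a1_def a2_def ..
    show ?thesis unfolding power2_eq_square F2_def uinv_LM t1 t2 hhq2[symmetric] commut_def c_def m2_def ..
  qed
  show ?thesis unfolding LHS RHS
    by (rule abs_v) (simp_all add: sK s2K hh2)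
qed

end

theorem lemmaA1:
  fixes D :: "nat \<Rightarrow> 'r::real_algebra_1 \<Rightarrow> 'r"
    and w wt :: "nat \<Rightarrow> 'r"
    and \<phi> \<theta>t \<theta>c :: 'r
    and F1 :: "'r fls" and F2 :: "'r fls fls"
  assumes D_add: "\<And>k a b. D k (a + b) = D k a + D k b"
    and D_scale: "\<And>k c a. D k (c *\<^sub>R a) = c *\<^sub>R D k a"
    and D_mult: "\<And>k a b. D k (a * b) = D k a * b + a * D k b"
    and D_comm: "\<And>j k a. D j (D k a) = D k (D j a)"
    and w0: "w 0 = 1" and wt0: "wt 0 = 1"
    and bil: "bilinear_identity D w wt"
    and phi_def: "\<phi> = - w 1"
    and thetat_def: "w 2 = - \<theta>t + (1/2) *\<^sub>R (D 0 \<phi> + \<phi> * \<phi>)"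
    and thetac_def: "\<theta>c = \<theta>t + (1/2) *\<^sub>R D 0 \<phi>"
    and F1_def: "F1 = 1 - fls_const (of_real (1/2)) * fls_X * (miwa1 D \<phi> - fls_const \<phi>)"
    and F2_def: "F2 = 1 - C2 (of_real (1/2)) * (Lam * Mu * uinv (Lam + Mu)) * (miwa2 D \<phi> - C2 \<phi>)"
  shows "(F2 = uinv (Lam + Mu) *
              (Mu * (1 - C2 (of_real (1/2)) * Lam * (miwa2 D \<phi> - miwa_mu D \<phi>))
               + Lam * (1 - C2 (of_real (1/2)) * Mu * (miwa_mu D \<phi> - C2 \<phi>))))
     \<and> (wt 2 = \<theta>t + (1/2) *\<^sub>R (D 0 \<phi> + \<phi> * \<phi>))
     \<and> (shser1 D w * ser1 wt = F1)
     \<and> ((shser1 D (\<lambda>n. D 0 (w n)) + fls_X_inv * shser1 D w) * ser1 wt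
           = fls_X_inv * F1\<^sup>2
             - fls_const (of_real (1/2)) * fls_X * (miwa1 D \<theta>c - fls_const \<theta>c)
             + fls_const (of_real (1/4)) * fls_X * commut (fls_const \<phi>) (miwa1 D \<phi>))
     \<and> (Mu_inv * shser_mu D w * ser_mu wt - Lam_inv * shser_lam D w * ser_lam wt
           = (Mu_inv - Lam_inv) * F2)
     \<and> (Mu_inv * (shser_mu D (\<lambda>n. D 0 (w n)) + Mu_inv * shser_mu D w) * ser_mu wt
           - Lam_inv * (shser_lam D (\<lambda>n. D 0 (w n)) + Lam_inv * shser_lam D w) * ser_lam wt
         = (Mu_inv\<^sup>2 - Lam_inv\<^sup>2) * F2\<^sup>2
           - C2 (of_real (1/2)) * ((Lam - Mu) * uinv (Lam + Mu)) * (miwa2 D \<theta>c - C2 \<theta>c)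
           + C2 (of_real (1/4)) * ((Lam - Mu) * uinv (Lam + Mu)) * commut (C2 \<phi>) (miwa2 D \<phi>))"
proof -
  interpret dsetup D
    by unfold_locales (fact D_add D_scale D_mult D_comm)+
  have 1: "F2 = uinv (Lam + Mu) *
              (Mu * (1 - C2 (of_real (1/2)) * Lam * (miwa2 D \<phi> - miwa_mu D \<phi>))
               + Lam * (1 - C2 (of_real (1/2)) * Mu * (miwa_mu D \<phi> - C2 \<phi>)))"
    by (rule conj_F2[OF F2_def])
  have 2: "wt 2 = \<theta>t + (1/2) *\<^sub>R (D 0 \<phi> + \<phi> * \<phi>)"
    by (rule conj_i[OF bil w0 wt0 phi_def thetat_def])
  have 3: "shser1 D w * ser1 wt = F1"
    by (rule conj_ii[OF bil w0 wt0 phi_def F1_def])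
  have 4: "(shser1 D (\<lambda>n. D 0 (w n)) + fls_X_inv * shser1 D w) * ser1 wt
           = fls_X_inv * F1\<^sup>2
             - fls_const (of_real (1/2)) * fls_X * (miwa1 D \<theta>c - fls_const \<theta>c)
             + fls_const (of_real (1/4)) * fls_X * commut (fls_const \<phi>) (miwa1 D \<phi>)"
    by (rule conj_iii[OF bil w0 wt0 phi_def thetat_def thetac_def F1_def])
  have 5: "Mu_inv * shser_mu D w * ser_mu wt - Lam_inv * shser_lam D w * ser_lam wt
           = (Mu_inv - Lam_inv) * F2"
    by (rule conj_iv[OF bil w0 wt0 phi_def F2_def])
  have 6: "Mu_inv * (shser_mu D (\<lambda>n. D 0 (w n)) + Mu_inv * shser_mu D w) * ser_mu wt
           - Lam_inv * (shser_lam D (\<lambda>n. D 0 (w n)) + Lam_inv * shser_lam D w) * ser_lam wt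
         = (Mu_inv\<^sup>2 - Lam_inv\<^sup>2) * F2\<^sup>2
           - C2 (of_real (1/2)) * ((Lam - Mu) * uinv (Lam + Mu)) * (miwa2 D \<theta>c - C2 \<theta>c)
           + C2 (of_real (1/4)) * ((Lam - Mu) * uinv (Lam + Mu)) * commut (C2 \<phi>) (miwa2 D \<phi>)"
    by (rule conj_v[OF bil w0 wt0 phi_def thetat_def thetac_def F2_def])
  show ?thesis using 1 2 3 4 5 6 by blast
qed

end
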